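(* Assume $D$ is irreducible and that the burst sizes are geometric: there is $\lambda\in(0,1)$ with $D_r=\lambda^{r-1}D_1$ for all $r\ge1$. Then $C_r=\frac{\lambda^{r-1}}{(1-\lambda)^{r+1}}D_1$ for all $r\ge1$, and for every $m\in\mathbb N$ $$B_m\le\frac1{m!}\Bigl(\frac{\lambda}{1-\lambda}\Bigr)^m\Bigl[\frac{\lVert D_1\rVert_\infty}{\delta\lambda(1-\lambda)}\Bigr]^{(m)}.$$
   Context: Standing model. Fix $N\ge1$, $\delta>0$; rates $a_{i,j}\ge0$ ($i\ne j$) and $b^{[r]}_{i,j}\ge0$ ($r\ge1$). $D_r:=(b^{[r]}_{i,j})$; $D_0$ has off-diagonal entries $a_{i,j}$ and diagonal $a_{i,i}:=-\sum_{k\ne i}a_{i,k}-\sum_k\sum_rb^{[r]}_{i,k}$; $D:=D_0+\sum_{r\ge1}D_r$; $C_r:=\sum_{n\ge r}\binom nrD_n$. For the Markov chain $(S(t),M(t))$ on $\{1,\dots,N\}\times\mathbb N$ with jumps $(i,m)\to(j,m)$ at rate $a_{i,j}$, $(i,m)\to(j,m+r)$ at rate $b^{[r]}_{i,j}$, $(i,m)\to(i,m-1)$ at rate $m\delta$, let $\mathbb P_{i,j}(m;t)=\Pr(S(t)=j,M(t)=m\mid S(0)=i,M(0)=0)$, $[\mathcal B_m(t)]_{i,j}=\sum_{n\ge m}\binom nm\mathbb P_{i,j}(n;t)$, and $B_m:=\lim_{t\to\infty}\pi^\top\mathcal B_m(t)\mathbf 1$ where $\pi$ is the invariant distribution of $D$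 ($B_0=1$). $\lVert\cdot\rVert_\infty$ is the maximum absolute row sum norm. $\zeta^{(m)}:=\Gamma(\zeta+m)/\Gamma(\zeta)=\zeta(\zeta+1)\cdots(\zeta+m-1)$ (rising factorial, $\zeta^{(0)}=1$). *)

theory Defs
  imports "HOL-Probability.Probability"
begin

text \<open>Phase set is {1..N}. Rates: a i j (used only for i \<noteq> j), b r i j = b^{[r]}_{i,j}
  (used only for r \<ge> 1). States of the chain are pairs (phase, level) :: nat \<times> nat.\<close>

definition Dmat :: "nat \<Rightarrow> (nat \<Rightarrow> nat \<Rightarrow> real) \<Rightarrow> (nat \<Rightarrow> nat \<Rightarrow> nat \<Rightarrow> real) \<Rightarrow> nat \<Rightarrow> nat \<Rightarrow> real" where
  "Dmat N a b i j =
     (if i = j then - (\<Sum>k\<in>{1..N}-{i}. a i k) - (\<Sum>k\<in>{1..N}. \<Sum>r. b (Suc r) i k)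
      else a i j) + (\<Sum>r. b (Suc r) i j)"

definition irreducible_gen :: "nat \<Rightarrow> (nat \<Rightarrow> nat \<Rightarrow> real) \<Rightarrow> bool" where
  "irreducible_gen N Q \<longleftrightarrow>
     (\<forall>i\<in>{1..N}. \<forall>j\<in>{1..N}.
        (i, j) \<in> {(k, l). k \<in> {1..N} \<and> l \<in> {1..N} \<and> k \<noteq> l \<and> Q k l > 0}\<^sup>*)"

definition Cmat :: "(nat \<Rightarrow> nat \<Rightarrow> nat \<Rightarrow> real) \<Rightarrow> nat \<Rightarrow> nat \<Rightarrow> nat \<Rightarrow> real" where
  "Cmat b r i j = (\<Sum>k. real ((r + k) choose r) * b (r + k) i j)"

definition norm_inf :: "nat \<Rightarrow> (nat \<Rightarrow> nat \<Rightarrow> real) \<Rightarrow> real" where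
  "norm_inf N A = Max ((\<lambda>i. \<Sum>j\<in>{1..N}. \<bar>A i j\<bar>) ` {1..N})"

definition rate :: "nat \<Rightarrow> (nat \<Rightarrow> nat \<Rightarrow> real) \<Rightarrow> (nat \<Rightarrow> nat \<Rightarrow> nat \<Rightarrow> real) \<Rightarrow> real
                    \<Rightarrow> nat \<times> nat \<Rightarrow> nat \<times> nat \<Rightarrow> real" where
  "rate N a b \<delta> x y =
     (case x of (i, m) \<Rightarrow> case y of (j, n) \<Rightarrow>
       if j \<in> {1..N} then
         (if n = m \<and> j \<noteq> i then a i j else 0)
         + (if m < n then b (n - m) i j else 0)
         + (if j = i \<and> 1 \<le> m \<and> n = m - 1 then real m * \<delta> else 0)
       else 0)"

definition qout :: "nat \<Rightarrow> (nat \<Rightarrow> nat \<Rightarrow> real) \<Rightarrow> (nat \<Rightarrow> nat \<Rightarrow> nat \<Rightarrow> real) \<Rightarrow> real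
                    \<Rightarrow> nat \<times> nat \<Rightarrow> real" where
  "qout N a b \<delta> x =
     (case x of (i, m) \<Rightarrow>
        (\<Sum>k\<in>{1..N}-{i}. a i k) + (\<Sum>k\<in>{1..N}. \<Sum>r. b (Suc r) i k) + real m * \<delta>)"

text \<open>Feller's iteration for the minimal solution of the backward Kolmogorov integral equations:
  Pit n x y t = probability of being in y at time t after at most n jumps.\<close>
primrec Pit :: "nat \<Rightarrow> (nat \<Rightarrow> nat \<Rightarrow> real) \<Rightarrow> (nat \<Rightarrow> nat \<Rightarrow> nat \<Rightarrow> real) \<Rightarrow> real \<Rightarrow> nat
                 \<Rightarrow> nat \<times> nat \<Rightarrow> nat \<times> nat \<Rightarrow> real \<Rightarrow> ennreal" where
  "Pit 0 a b \<delta> N x y t = 0"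
| "Pit (Suc n) a b \<delta> N x y t =
     (if x = y then ennreal (exp (- qout N a b \<delta> x * t)) else 0)
     + (\<integral>\<^sup>+ s. indicator {0..t} s * ennreal (exp (- qout N a b \<delta> x * s))
           * (\<integral>\<^sup>+ z. ennreal (rate N a b \<delta> x z) * Pit n a b \<delta> N z y (t - s) \<partial>count_space UNIV)
         \<partial>lborel)"

definition Ptrans :: "(nat \<Rightarrow> nat \<Rightarrow> real) \<Rightarrow> (nat \<Rightarrow> nat \<Rightarrow> nat \<Rightarrow> real) \<Rightarrow> real \<Rightarrow> nat
                      \<Rightarrow> nat \<times> nat \<Rightarrow> nat \<times> nat \<Rightarrow> real \<Rightarrow> ennreal" where
  "Ptrans a b \<delta> N x y t = (SUP n. Pit n a b \<delta> N x y t)"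

definition Bcal :: "(nat \<Rightarrow> nat \<Rightarrow> real) \<Rightarrow> (nat \<Rightarrow> nat \<Rightarrow> nat \<Rightarrow> real) \<Rightarrow> real \<Rightarrow> nat
                      \<Rightarrow> nat \<Rightarrow> nat \<Rightarrow> nat \<Rightarrow> real \<Rightarrow> ennreal" where
  "Bcal a b \<delta> N m i j t = (\<Sum>n. of_nat (n choose m) * Ptrans a b \<delta> N (i, 0) (j, n) t)"

definition piB :: "(nat \<Rightarrow> real) \<Rightarrow> (nat \<Rightarrow> nat \<Rightarrow> real) \<Rightarrow> (nat \<Rightarrow> nat \<Rightarrow> nat \<Rightarrow> real) \<Rightarrow> real
                   \<Rightarrow> nat \<Rightarrow> nat \<Rightarrow> real \<Rightarrow> ennreal" where
  "piB \<pi> a b \<delta> N m t = (\<Sum>i\<in>{1..N}. \<Sum>j\<in>{1..N}. ennreal (\<pi> i) * Bcal a b \<delta> N m i j t)"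

end

theory Submission
  imports Defs
begin


lemma kser:
  fixes lam :: real
  assumes "0 \<le> lam" "lam < 1"
  shows "(\<lambda>k. real ((p + k) choose p) * lam ^ k) sums (1 / (1 - lam) ^ (p + 1))"
proof -
  have "\<bar>- lam\<bar> < 1" using assms by simp
  from gen_binomial_real[OF this, of "- real (p + 1)"]
  have s: "(\<lambda>n. (- real (p + 1) gchoose n) * (- lam) ^ n) sums (1 + - lam) powr (- real (p + 1))" .
  have e: "(- real (p + 1) gchoose n) * (- lam) ^ n = real ((p + n) choose p) * lam ^ n" for n
  proof -
    have "(- real (p + 1) gchoose n) = (- 1) ^ n * (real (p + 1) + of_nat n - 1 gchoose n)"
      by (rule gbinomial_minus)
    also have "real (p + 1) + of_nat n - 1 = real (p + n)" by simp
    also have "(real (p + n) gchoose n) = real ((p + n) choose n)"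
      by (simp add: binomial_gbinomial)
    also have "(p + n) choose n = (p + n) choose p"
      using binomial_symmetric[of n "p + n"] by simp
    finally show ?thesis by (simp add: power_minus')
  qed
  have r: "(1 + - lam) powr (- real (p + 1)) = 1 / (1 - lam) ^ (p + 1)"
  proof -
    have "(1 + - lam) powr (- real (p + 1)) = inverse ((1 - lam) powr real (p + 1))"
      by (subst powr_minus[symmetric]) simp
    also have "(1 - lam) powr real (p + 1) = (1 - lam) ^ (p + 1)"
      using assms by (intro powr_realpow) simp
    finally show ?thesis by (simp add: divide_inverse)
  qed
  show ?thesis using s unfolding e r .
qed


locale qm =
  fixes N :: nat and \<delta> lam :: real and a :: "nat \<Rightarrow> nat \<Rightarrow> real"
    and b :: "nat \<Rightarrow> nat \<Rightarrow> nat \<Rightarrow> real" and \<pi> :: "nat \<Rightarrow> real"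
  assumes N: "N \<ge> 1" and delta: "\<delta> > 0"
    and a_nonneg: "\<And>i j. i \<in> {1..N} \<Longrightarrow> j \<in> {1..N} \<Longrightarrow> i \<noteq> j \<Longrightarrow> a i j \<ge> 0"
    and b_nonneg: "\<And>r i j. r \<ge> 1 \<Longrightarrow> i \<in> {1..N} \<Longrightarrow> j \<in> {1..N} \<Longrightarrow> b r i j \<ge> 0"
    and lam0: "0 < lam" and lam1: "lam < 1"
    and geom: "\<And>r i j. r \<ge> 1 \<Longrightarrow> i \<in> {1..N} \<Longrightarrow> j \<in> {1..N} \<Longrightarrow> b r i j = lam ^ (r - 1) * b 1 i j"
    and pi_nonneg: "\<And>i. i \<in> {1..N} \<Longrightarrow> \<pi> i \<ge> 0"
    and pi_sum: "(\<Sum>i\<in>{1..N}. \<pi> i) = 1"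
    and pi_inv: "\<And>j. j \<in> {1..N} \<Longrightarrow> (\<Sum>i\<in>{1..N}. \<pi> i * Dmat N a b i j) = 0"
begin

abbreviation "PH \<equiv> {1..N}"
definition "b1 i j = b 1 i j"
lemma b1_nonneg: "i \<in> PH \<Longrightarrow> j \<in> PH \<Longrightarrow> b1 i j \<ge> 0"
  using b_nonneg[of 1 i j] by (simp add: b1_def)

lemma b_geom_suc: "i \<in> PH \<Longrightarrow> j \<in> PH \<Longrightarrow> b (Suc r) i j = lam ^ r * b1 i j"
  using geom[of "Suc r" i j] by (simp add: b1_def)

lemma gen_int:
  fixes V :: "nat \<times> nat \<Rightarrow> real"
  assumes i: "i \<in> PH" and V0: "\<And>z. 0 \<le> V z"
    and sV: "\<And>j. j \<in> PH \<Longrightarrow> summable (\<lambda>r. lam ^ r * V (j, k + r + 1))"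
  shows "(\<integral>\<^sup>+ z. ennreal (rate N a b \<delta> (i, k) z) * ennreal (V z) \<partial>count_space UNIV)
    = ennreal ((\<Sum>j\<in>PH - {i}. a i j * V (j, k))
        + (\<Sum>j\<in>PH. b1 i j * (\<Sum>r. lam ^ r * V (j, k + r + 1)))
        + real k * \<delta> * V (i, k - 1))"
proof -
  define f where "f j n = rate N a b \<delta> (i, k) (j, n) * V (j, n)" for j n
  define t1 where "t1 j = (if j \<noteq> i then a i j * V (j, k) else 0)" for j
  define t2 where "t2 j = b1 i j * (\<Sum>r. lam ^ r * V (j, k + r + 1))" for j
  define t3 where "t3 j = (if j = i then real k * \<delta> * V (i, k - 1) else 0)" for j
  have f0: "0 \<le> f j n" for j n
  proof (cases "j \<in> PH")
    case True
    have "0 \<le> rate N a b \<delta> (i, k) (j, n)"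
      using True i a_nonneg[of i j] b_nonneg[of "n - k" i j] delta
      by (auto simp: rate_def)
    then show ?thesis using V0 by (simp add: f_def)
  next
    case False
    then have "rate N a b \<delta> (i, k) (j, n) = 0" unfolding rate_def by (simp only: if_False prod.case)
    then show ?thesis by (simp add: f_def)
  qed
  have fs: "f j sums (t1 j + t2 j + t3 j)" if j: "j \<in> PH" for j
  proof -
    have e: "f j n = (if n = k then t1 j else 0)
       + (if k < n then lam ^ (n - k - 1) * b1 i j * V (j, n) else 0)
       + (if n = k - 1 \<and> 1 \<le> k then t3 j else 0)" for n
    proof -
      have "k < n \<Longrightarrow> b (n - k) i j = lam ^ (n - k - 1) * b1 i j"
        using geom[of "n - k" i j] i j by (simp add: b1_def)
      then show ?thesis using j
        by (auto simp: f_def t1_def t3_def rate_def algebra_simps)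
    qed
    have s1: "(\<lambda>n. if n = k then t1 j else 0) sums t1 j"
      using sums_single[of k "\<lambda>_. t1 j"] by simp
    have s3: "(\<lambda>n. if n = k - 1 \<and> 1 \<le> k then t3 j else 0) sums t3 j"
    proof (cases "1 \<le> k")
      case True
      then show ?thesis using sums_single[of "k - 1" "\<lambda>_. t3 j"] by simp
    next
      case False
      then have "t3 j = 0" by (simp add: t3_def)
      then show ?thesis using False by simp
    qed
    have s2: "(\<lambda>n. if k < n then lam ^ (n - k - 1) * b1 i j * V (j, n) else 0) sums t2 j"
    proof -
      have "(\<lambda>r. b1 i j * (lam ^ r * V (j, k + r + 1))) sums t2 j"
        unfolding t2_def by (intro sums_mult summable_sums sV j)
      then have "(\<lambda>r. (\<lambda>n. if k < n then lam ^ (n - k - 1) * b1 i j * V (j, n) else 0) (r + (k + 1))) sums t2 j"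
        by (simp add: algebra_simps)
      then show ?thesis by (subst (asm) sums_zero_iff_shift) auto
    qed
    show ?thesis unfolding e by (intro sums_add s1 s2 s3)
  qed
  have "(\<integral>\<^sup>+ z. ennreal (rate N a b \<delta> (i, k) z) * ennreal (V z) \<partial>count_space UNIV)
      = (\<integral>\<^sup>+ z. ennreal (f (fst z) (snd z)) \<partial>count_space UNIV)"
    by (intro nn_integral_cong) (auto simp: f_def ennreal_mult'' V0)
  also have "\<dots> = (\<integral>\<^sup>+ j. \<integral>\<^sup>+ n. ennreal (f j n) \<partial>count_space UNIV \<partial>count_space UNIV)"
    using nn_integral_fst_count_space[of "\<lambda>z. ennreal (f (fst z) (snd z))"] by simp
  also have "\<dots> = (\<integral>\<^sup>+ j. ennreal (t1 j + t2 j + t3 j) * indicator PH j \<partial>count_space UNIV)"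
  proof (intro nn_integral_cong)
    fix j :: nat
    show "(\<integral>\<^sup>+ n. ennreal (f j n) \<partial>count_space UNIV) = ennreal (t1 j + t2 j + t3 j) * indicator PH j"
    proof (cases "j \<in> PH")
      case True
      have "(\<integral>\<^sup>+ n. ennreal (f j n) \<partial>count_space UNIV) = (\<Sum>n. ennreal (f j n))"
        by (rule nn_integral_count_space_nat)
      also have "\<dots> = ennreal (\<Sum>n. f j n)"
        using fs[OF True] f0 by (intro suminf_ennreal2) (auto simp: sums_iff)
      also have "(\<Sum>n. f j n) = t1 j + t2 j + t3 j" using fs[OF True] by (simp add: sums_iff)
      finally show ?thesis using True by simp
    next
      case False
      then have "rate N a b \<delta> (i, k) (j, n) = 0" for n unfolding rate_def by (simp only: if_False prod.case)
      then show ?thesis using False by (simp add: f_def)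
    qed
  qed
  also have "\<dots> = (\<Sum>j\<in>PH. ennreal (t1 j + t2 j + t3 j))"
    by (subst nn_integral_count_space_indicator[symmetric]) (auto simp: nn_integral_count_space_finite)
  also have "\<dots> = ennreal (\<Sum>j\<in>PH. t1 j + t2 j + t3 j)"
  proof (intro sum_ennreal)
    fix j assume j: "j \<in> PH"
    have "0 \<le> (\<Sum>n. f j n)" using f0 fs[OF j] by (intro suminf_nonneg) (auto simp: sums_iff)
    then show "0 \<le> t1 j + t2 j + t3 j" using fs[OF j] by (simp add: sums_iff)
  qed
  also have "(\<Sum>j\<in>PH. t1 j + t2 j + t3 j) = (\<Sum>j\<in>PH - {i}. a i j * V (j, k))
        + (\<Sum>j\<in>PH. b1 i j * (\<Sum>r. lam ^ r * V (j, k + r + 1)))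
        + real k * \<delta> * V (i, k - 1)"
  proof -
    have "(\<Sum>j\<in>PH. t1 j) = (\<Sum>j\<in>PH - {i}. a i j * V (j, k))"
      by (rule sum.mono_neutral_cong_right) (auto simp: t1_def)
    moreover have "(\<Sum>j\<in>PH. t3 j) = real k * \<delta> * V (i, k - 1)"
      using i by (simp add: t3_def)
    ultimately show ?thesis by (simp add: sum.distrib t2_def)
  qed
  finally show ?thesis .
qed

end


lemma tri: fixes m :: nat and f :: "nat \<Rightarrow> nat \<Rightarrow> real" shows
 "(\<Sum>l\<le>m. \<Sum>p\<le>l. f (l - p) p) = (\<Sum>l\<le>m. \<Sum>p\<le>m - l. f l p)"
proof (induction m)
  case 0
  then show ?case by simp
next
  case (Suc m)
  have "(\<Sum>p\<le>Suc m - l. f l p) = (\<Sum>p\<le>m - l. f l p) + (if l \<le> m then f l (Suc m - l) else 0)" if "l \<le> Suc m" for l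
  proof (cases "l \<le> m")
    case True
    then have "Suc m - l = Suc (m - l)" by simp
    then show ?thesis using True by (simp add: Suc_diff_le)
  next
    case False
    then have "l = Suc m" using that by simp
    then show ?thesis by simp
  qed
  then have h1: "(\<Sum>l\<le>Suc m. \<Sum>p\<le>Suc m - l. f l p) = (\<Sum>l\<le>Suc m. (\<Sum>p\<le>m - l. f l p) + (if l \<le> m then f l (Suc m - l) else 0))"
    by (intro sum.cong) auto
  have h2: "(\<Sum>l\<le>Suc m. (\<Sum>p\<le>m - l. f l p) + (if l \<le> m then f l (Suc m - l) else 0)) = (\<Sum>l\<le>m. \<Sum>p\<le>m - l. f l p) + (f (Suc m) 0 + (\<Sum>l\<le>m. f l (Suc m - l)))"
    by (simp add: sum.distrib)
  have h3: "f (Suc m) 0 + (\<Sum>l\<le>m. f l (Suc m - l)) = (\<Sum>p\<le>Suc m. f (Suc m - p) p)"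
  proof -
    have "(\<Sum>p\<le>Suc m. f (Suc m - p) p) = (\<Sum>l\<le>Suc m. f l (Suc m - l))"
      by (rule sum.reindex_bij_witness[where i="\<lambda>l. Suc m - l" and j="\<lambda>l. Suc m - l"]) auto
    then show ?thesis by simp
  qed
  show ?case using Suc.IH h1 h2 h3 by simp
qed

lemma binom_death: "real k * real ((k - 1) choose l) - real k * real (k choose l) = - real l * real (k choose l)"
proof (cases k)
  case 0
  then show ?thesis by (cases l) auto
next
  case (Suc k')
  show ?thesis
  proof (cases l)
    case 0
    then show ?thesis using Suc by simp
  next
    case (Suc l')
    have p: "Suc k' choose Suc l' = (k' choose l') + (k' choose Suc l')" by simp
    have q: "Suc k' * (k' choose l') = (Suc k' choose Suc l') * Suc l'" by (rule Suc_times_binomial_eq)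
    have "real (Suc k') * real (k' choose l') = real (Suc k' choose Suc l') * real (Suc l')"
      using q by (metis of_nat_mult)
    then show ?thesis using Suc \<open>k = Suc k'\<close> p by (simp add: algebra_simps)
  qed
qed

context qm begin

definition "kk p = (if p = 0 then 1 / (1 - lam) else lam ^ (p - 1) / (1 - lam) ^ (p + 1))"

lemma kk_sums: "(\<lambda>r. lam ^ r * real (Suc r choose p)) sums kk p"
proof (cases "p = 0")
  case True
  then show ?thesis using geometric_sums[of lam] lam0 lam1 by (simp add: kk_def)
next
  case False
  then obtain q where p: "p = Suc q" by (cases p) auto
  have "(\<lambda>k. lam ^ q * (real ((p + k) choose p) * lam ^ k)) sums (lam ^ q * (1 / (1 - lam) ^ (p + 1)))"
    by (intro sums_mult kser) (use lam0 lam1 in auto)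
  then have "(\<lambda>k. (\<lambda>r. lam ^ r * real (Suc r choose p)) (k + q)) sums kk p"
    using p by (simp add: kk_def power_add algebra_simps)
  then show ?thesis
    by (subst (asm) sums_zero_iff_shift) (auto simp: p binomial_eq_0)
qed

lemma kk_pos: "kk p > 0"
  using lam0 lam1 by (simp add: kk_def)

definition "asum i = (\<Sum>j\<in>PH - {i}. a i j)"
definition "bsum i = (\<Sum>j\<in>PH. b1 i j)"

lemma asum_nonneg: "i \<in> PH \<Longrightarrow> asum i \<ge> 0"
  unfolding asum_def by (intro sum_nonneg) (auto intro: a_nonneg)
lemma bsum_nonneg: "i \<in> PH \<Longrightarrow> bsum i \<ge> 0"
  unfolding bsum_def by (intro sum_nonneg) (auto intro: b1_nonneg)

lemma bsuc_suminf: "i \<in> PH \<Longrightarrow> j \<in> PH \<Longrightarrow> (\<Sum>r. b (Suc r) i j) = b1 i j / (1 - lam)"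
proof -
  assume ij: "i \<in> PH" "j \<in> PH"
  have "(\<lambda>r. lam ^ r * b1 i j) sums (1 / (1 - lam) * b1 i j)"
    using geometric_sums[of lam] lam0 lam1 by (intro sums_mult2) auto
  then show ?thesis using b_geom_suc[OF ij] by (simp add: sums_iff)
qed

definition "qv i k = asum i + bsum i / (1 - lam) + real k * \<delta>"

lemma qout_eq: "i \<in> PH \<Longrightarrow> qout N a b \<delta> (i, k) = qv i k"
  by (simp add: qout_def qv_def asum_def bsum_def bsuc_suminf sum_divide_distrib)

lemma Dmat_eq: "i \<in> PH \<Longrightarrow> j \<in> PH \<Longrightarrow> Dmat N a b i j =
   (if i = j then - asum i - bsum i / (1 - lam) else a i j) + b1 i j / (1 - lam)"
  by (simp add: Dmat_def asum_def bsum_def bsuc_suminf sum_divide_distrib)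

definition "Vf m G = (\<lambda>(j, n). \<Sum>l\<le>m. real (n choose l) * G l j)"

lemma vf_sums: "(\<lambda>r. lam ^ r * Vf m G (j, k + r + 1)) sums
   (\<Sum>l\<le>m. (\<Sum>p\<le>l. real (k choose (l - p)) * kk p) * G l j)"
proof -
  have e: "lam ^ r * Vf m G (j, k + r + 1) =
     (\<Sum>l\<le>m. \<Sum>p\<le>l. (real (k choose (l - p)) * G l j) * (lam ^ r * real (Suc r choose p)))" for r
  proof -
    have "real ((k + r + 1) choose l) = (\<Sum>p\<le>l. real (Suc r choose p) * real (k choose (l - p)))" for l
      using vandermonde[where r=l and m="Suc r" and n=k] by (simp add: algebra_simps flip: of_nat_mult of_nat_sum)
    then show ?thesis
      by (simp add: Vf_def sum_distrib_left sum_distrib_right algebra_simps)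
  qed
  have "(\<lambda>r. \<Sum>l\<le>m. \<Sum>p\<le>l. (real (k choose (l - p)) * G l j) * (lam ^ r * real (Suc r choose p)))
     sums (\<Sum>l\<le>m. \<Sum>p\<le>l. (real (k choose (l - p)) * G l j) * kk p)"
    by (intro sums_sum sums_mult kk_sums)
  moreover have "(\<Sum>l\<le>m. \<Sum>p\<le>l. (real (k choose (l - p)) * G l j) * kk p)
     = (\<Sum>l\<le>m. (\<Sum>p\<le>l. real (k choose (l - p)) * kk p) * G l j)"
    by (simp add: sum_distrib_left sum_distrib_right mult_ac)
  ultimately show ?thesis unfolding e by simp
qed


lemma gen_alg:
  assumes i: "i \<in> PH"
  shows "(\<Sum>j\<in>PH - {i}. a i j * Vf m G (j, k))
        + (\<Sum>j\<in>PH. b1 i j * (\<Sum>l\<le>m. (\<Sum>p\<le>l. real (k choose (l - p)) * kk p) * G l j))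
        + real k * \<delta> * Vf m G (i, k - 1) - qv i k * Vf m G (i, k)
     = (\<Sum>l\<le>m. real (k choose l) * ((\<Sum>j\<in>PH. Dmat N a b i j * G l j) - real l * \<delta> * G l i
          + (\<Sum>p\<in>{1..m - l}. \<Sum>j\<in>PH. kk p * b1 i j * G (l + p) j)))"
proof -
  define X where "X l = (\<Sum>j\<in>PH. b1 i j * G l j)" for l
  have P1: "(\<Sum>j\<in>PH - {i}. a i j * Vf m G (j, k)) = (\<Sum>l\<le>m. real (k choose l) * (\<Sum>j\<in>PH - {i}. a i j * G l j))"
    by (simp add: Vf_def sum_distrib_left sum_distrib_right mult_ac) (rule sum.swap)
  have P2: "(\<Sum>j\<in>PH. b1 i j * (\<Sum>l\<le>m. (\<Sum>p\<le>l. real (k choose (l - p)) * kk p) * G l j))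
      = (\<Sum>l\<le>m. real (k choose l) * (\<Sum>p\<le>m - l. kk p * X (l + p)))"
  proof -
    have "(\<Sum>j\<in>PH. b1 i j * (\<Sum>l\<le>m. (\<Sum>p\<le>l. real (k choose (l - p)) * kk p) * G l j))
       = (\<Sum>l\<le>m. (\<Sum>p\<le>l. real (k choose (l - p)) * kk p) * X l)"
      by (simp add: X_def sum_distrib_left sum_distrib_right mult_ac)
        (subst sum.swap, rule sum.cong[OF refl], rule sum.swap)
    also have "\<dots> = (\<Sum>l\<le>m. \<Sum>p\<le>l. (\<lambda>l' p. real (k choose l') * kk p * X (l' + p)) (l - p) p)"
      by (intro sum.cong refl) (simp add: sum_distrib_right)
    also have "\<dots> = (\<Sum>l\<le>m. \<Sum>p\<le>m - l. real (k choose l) * kk p * X (l + p))"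
      by (rule tri)
    finally show ?thesis by (simp add: sum_distrib_left mult_ac)
  qed
  have P3: "real k * \<delta> * Vf m G (i, k - 1) - real k * \<delta> * Vf m G (i, k)
      = (\<Sum>l\<le>m. real (k choose l) * (- real l * \<delta> * G l i))"
  proof -
    have "real k * \<delta> * Vf m G (i, k - 1) - real k * \<delta> * Vf m G (i, k)
       = (\<Sum>l\<le>m. \<delta> * G l i * (real k * real ((k - 1) choose l) - real k * real (k choose l)))"
      by (simp add: Vf_def sum_distrib_left sum_subtractf[symmetric] algebra_simps)
    also have "\<dots> = (\<Sum>l\<le>m. real (k choose l) * (- real l * \<delta> * G l i))"
      by (simp only: binom_death) (simp add: algebra_simps)
    finally show ?thesis .
  qed
  have P4: "(\<Sum>j\<in>PH. Dmat N a b i j * G l j) = (\<Sum>j\<in>PH - {i}. a i j * G l j)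
      - (asum i + bsum i / (1 - lam)) * G l i + kk 0 * X l" for l
  proof -
    have "(\<Sum>j\<in>PH. Dmat N a b i j * G l j) = (\<Sum>j\<in>PH. (if i = j then - asum i - bsum i / (1 - lam) else a i j) * G l j)
       + (\<Sum>j\<in>PH. b1 i j / (1 - lam) * G l j)"
      using i by (simp add: Dmat_eq sum.distrib[symmetric] algebra_simps)
    also have "(\<Sum>j\<in>PH. (if i = j then - asum i - bsum i / (1 - lam) else a i j) * G l j)
       = (- asum i - bsum i / (1 - lam)) * G l i + (\<Sum>j\<in>PH - {i}. a i j * G l j)"
      using i by (subst sum.remove[of _ i]) (auto intro!: sum.cong)
    also have "(\<Sum>j\<in>PH. b1 i j / (1 - lam) * G l j) = kk 0 * X l"
      by (simp add: kk_def X_def sum_distrib_left)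
    finally show ?thesis by (simp add: algebra_simps)
  qed
  have P5: "(\<Sum>p\<le>m - l. kk p * X (l + p)) = kk 0 * X l + (\<Sum>p\<in>{1..m - l}. kk p * X (l + p))" for l
    by (simp add: atMost_atLeast0 sum.atLeast_Suc_atMost)
  have P6: "(\<Sum>p\<in>{1..m - l}. \<Sum>j\<in>PH. kk p * b1 i j * G (l + p) j) = (\<Sum>p\<in>{1..m - l}. kk p * X (l + p))" for l
    by (simp add: X_def sum_distrib_left mult_ac)
  have qv: "qv i k * Vf m G (i, k) = (\<Sum>l\<le>m. real (k choose l) * ((asum i + bsum i / (1 - lam)) * G l i))
       + real k * \<delta> * Vf m G (i, k)"
    by (simp add: qv_def Vf_def sum_distrib_left algebra_simps sum.distrib)
  show ?thesis
    unfolding P4 P6 using P1 P2 P3 qv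
    by (simp add: P5 sum.distrib[symmetric] sum_subtractf[symmetric] algebra_simps)
qed

end


definition ser :: "(nat \<Rightarrow> real) \<Rightarrow> real \<Rightarrow> real" where
  "ser f t = (\<Sum>n. f n / fact n * t ^ n)"

definition sbound :: "(nat \<Rightarrow> real) \<Rightarrow> bool" where
  "sbound f \<longleftrightarrow> (\<exists>C R. R \<ge> 0 \<and> (\<forall>n. \<bar>f n\<bar> \<le> C * R ^ n))"

lemma sbound_summable:
  assumes "sbound f" shows "summable (\<lambda>n. f n / fact n * t ^ n)"
proof -
  obtain C R where R0: "R \<ge> 0" and b: "\<And>n. \<bar>f n\<bar> \<le> C * R ^ n" using assms by (auto simp: sbound_def)
  have R: "\<bar>f n\<bar> \<le> C * \<bar>R\<bar> ^ n" for n
    using b[of n] R0 by simp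
  have s: "summable (\<lambda>n. C * (inverse (fact n) * (\<bar>R\<bar> * \<bar>t\<bar>) ^ n))"
    by (intro summable_mult summable_exp)
  show ?thesis
  proof (rule summable_comparison_test'[OF s])
    fix n
    have "norm (f n / fact n * t ^ n) = \<bar>f n\<bar> * \<bar>t\<bar> ^ n / fact n"
      by (simp add: abs_mult power_abs)
    also have "\<dots> \<le> C * \<bar>R\<bar> ^ n * \<bar>t\<bar> ^ n / fact n"
      by (intro divide_right_mono mult_right_mono R) auto
    also have "\<dots> = C * (inverse (fact n) * (\<bar>R\<bar> * \<bar>t\<bar>) ^ n)"
      by (simp add: power_mult_distrib field_simps)
    finally show "norm (f n / fact n * t ^ n) \<le> C * (inverse (fact n) * (\<bar>R\<bar> * \<bar>t\<bar>) ^ n)" .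
  qed
qed

lemma sbound_summable2: "sbound f \<Longrightarrow> summable (\<lambda>n. f n * t ^ n / fact n)"
  using sbound_summable[of f t] by (simp add: field_simps)

lemma sbound_shift: "sbound f \<Longrightarrow> sbound (\<lambda>n. f (Suc n))"
proof -
  assume "sbound f"
  then obtain C R where R0: "R \<ge> 0" and b: "\<And>n. \<bar>f n\<bar> \<le> C * R ^ n" by (auto simp: sbound_def)
  have "\<bar>f (Suc n)\<bar> \<le> (C * R) * R ^ n" for n using b[of "Suc n"] by (simp add: mult_ac)
  then show ?thesis unfolding sbound_def using R0 by blast
qed

lemma ser_deriv:
  assumes "sbound f"
  shows "((\<lambda>t. ser f t) has_real_derivative ser (\<lambda>n. f (Suc n)) t) (at t)"
proof -
  have s: "summable (\<lambda>n. (f n / fact n) * y ^ n)" for y using sbound_summable[OF assms] by simp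
  have d: "diffs (\<lambda>n. f n / fact n) n = f (Suc n) / fact n" for n
  proof -
    have "fact (Suc n) = real (Suc n) * (fact n :: real)" by (simp only: fact_Suc of_nat_mult)
    moreover have "real (Suc n) > 0" "(fact n :: real) > 0" by auto
    ultimately show ?thesis by (simp add: diffs_def)
  qed
  show ?thesis
    using termdiffs_strong_converges_everywhere[of "\<lambda>n. f n / fact n" t, OF s]
    unfolding ser_def d by simp
qed

lemma ser_cont: "sbound f \<Longrightarrow> continuous_on S (ser f)"
  using ser_deriv by (meson DERIV_continuous continuous_at_imp_continuous_on)

lemma ser_0: "ser f 0 = f 0"
proof -
  have "(\<lambda>n. f n / fact n * 0 ^ n) sums (f 0)"
    using sums_single[of 0 "\<lambda>_. f 0"] by (rule sums_cong[THEN iffD1, rotated]) auto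
  then show ?thesis by (simp add: ser_def sums_iff)
qed

lemma ser_add: "sbound f \<Longrightarrow> sbound g \<Longrightarrow> ser (\<lambda>n. f n + g n) t = ser f t + ser g t"
proof -
  assume "sbound f" "sbound g"
  then have "summable (\<lambda>n. f n / fact n * t ^ n)" "summable (\<lambda>n. g n / fact n * t ^ n)"
    by (blast intro: sbound_summable)+
  moreover have "(\<lambda>n. (f n + g n) / fact n * t ^ n) = (\<lambda>n. f n / fact n * t ^ n + g n / fact n * t ^ n)"
    by (simp add: add_divide_distrib distrib_right)
  ultimately show ?thesis unfolding ser_def using \<open>sbound f\<close> \<open>sbound g\<close>
    by (simp add: suminf_add[OF sbound_summable2 sbound_summable2])
qed

lemma ser_cmult: "sbound f \<Longrightarrow> ser (\<lambda>n. c * f n) t = c * ser f t"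
  unfolding ser_def using sbound_summable[of f t]
  by (subst suminf_mult[symmetric]) (auto simp: algebra_simps)

lemma ser_sum: "finite A \<Longrightarrow> (\<And>i. i \<in> A \<Longrightarrow> sbound (f i)) \<Longrightarrow>
   ser (\<lambda>n. \<Sum>i\<in>A. f i n) t = (\<Sum>i\<in>A. ser (f i) t)"
proof -
  assume A: "finite A" "\<And>i. i \<in> A \<Longrightarrow> sbound (f i)"
  have "(\<lambda>n. (\<Sum>i\<in>A. f i n) / fact n * t ^ n) = (\<lambda>n. \<Sum>i\<in>A. f i n / fact n * t ^ n)"
    by (simp add: sum_divide_distrib sum_distrib_right)
  moreover have "(\<Sum>n. \<Sum>i\<in>A. f i n / fact n * t ^ n) = (\<Sum>i\<in>A. \<Sum>n. f i n / fact n * t ^ n)"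
    using A sbound_summable by (intro suminf_sum) auto
  ultimately show ?thesis unfolding ser_def by simp
qed

lemma ser_mono: "sbound f \<Longrightarrow> sbound g \<Longrightarrow> (\<And>n. f n \<le> g n) \<Longrightarrow> t \<ge> 0 \<Longrightarrow> ser f t \<le> ser g t"
  unfolding ser_def using sbound_summable
  by (intro suminf_le) (auto intro!: mult_right_mono divide_right_mono)

lemma ser_nonneg: "sbound f \<Longrightarrow> (\<And>n. 0 \<le> f n) \<Longrightarrow> t \<ge> 0 \<Longrightarrow> ser f t \<ge> 0"
  unfolding ser_def using sbound_summable
  by (intro suminf_nonneg) auto


context qm begin

definition "nb = norm_inf N (b 1)"

lemma kk_nonneg: "kk p \<ge> 0" using kk_pos[of p] by simp

lemma bsum_le_nb: "i \<in> PH \<Longrightarrow> bsum i \<le> nb"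
proof -
  assume i: "i \<in> PH"
  have "bsum i = (\<Sum>j\<in>{1..N}. \<bar>b 1 i j\<bar>)"
    unfolding bsum_def using b1_nonneg i by (intro sum.cong) (auto simp: b1_def)
  also have "\<dots> \<le> nb" unfolding nb_def norm_inf_def using i by (intro Max_ge) auto
  finally show ?thesis .
qed

lemma nb_nonneg: "nb \<ge> 0"
  using bsum_le_nb[of 1] bsum_nonneg[of 1] N by simp

definition "\<theta> = (\<Sum>i\<in>PH. asum i + bsum i / (1 - lam))"

lemma theta_ge: "i \<in> PH \<Longrightarrow> asum i + bsum i / (1 - lam) \<le> \<theta>"
  unfolding \<theta>_def using asum_nonneg bsum_nonneg lam1
  by (intro member_le_sum) (auto intro!: add_nonneg_nonneg divide_nonneg_pos)

lemma theta_nonneg: "\<theta> \<ge> 0"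
  using theta_ge[of 1] asum_nonneg[of 1] bsum_nonneg[of 1] N lam1 by (smt (verit) atLeastAtMost_iff divide_nonneg_pos le_numeral_extra(4))

definition "Am i j = Dmat N a b i j + (if i = j then \<theta> else 0)"

lemma Am_nonneg: "i \<in> PH \<Longrightarrow> j \<in> PH \<Longrightarrow> Am i j \<ge> 0"
proof -
  assume ij: "i \<in> PH" "j \<in> PH"
  have "b1 i j / (1 - lam) \<ge> 0" using b1_nonneg[OF ij] lam1 by simp
  then show ?thesis
    using ij theta_ge[of i] a_nonneg[of i j] by (auto simp: Am_def Dmat_eq)
qed

lemma Dmat_rowsum: "i \<in> PH \<Longrightarrow> (\<Sum>j\<in>PH. Dmat N a b i j) = 0"
proof -
  assume i: "i \<in> PH"
  have "(\<Sum>j\<in>PH. Dmat N a b i j) = (\<Sum>j\<in>PH. (if i = j then - asum i - bsum i / (1 - lam) else a i j))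
     + (\<Sum>j\<in>PH. b1 i j / (1 - lam))"
    using i by (simp add: Dmat_eq sum.distrib)
  also have "(\<Sum>j\<in>PH. (if i = j then - asum i - bsum i / (1 - lam) else a i j))
     = (- asum i - bsum i / (1 - lam)) + asum i"
    using i unfolding asum_def by (subst sum.remove[of _ i]) (auto intro!: sum.cong)
  also have "(\<Sum>j\<in>PH. b1 i j / (1 - lam)) = bsum i / (1 - lam)"
    by (simp add: bsum_def sum_divide_distrib)
  finally show ?thesis by simp
qed

lemma Am_rowsum: "i \<in> PH \<Longrightarrow> (\<Sum>j\<in>PH. Am i j) = \<theta>"
  using Dmat_rowsum by (simp add: Am_def sum.distrib)

primrec gam :: "nat \<Rightarrow> nat \<Rightarrow> nat \<Rightarrow> real" where
  "gam p 0 i = (if p = 0 then 1 else 0)"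
| "gam p (Suc n) i = (\<Sum>j\<in>PH. (Am i j + (if i = j then real p * \<delta> else 0)) * gam p n j)
     + (\<Sum>l\<in>{1..p}. \<Sum>j\<in>PH. kk l * b1 i j * gam (p - l) n j)"

primrec gh :: "nat \<Rightarrow> nat \<Rightarrow> real" where
  "gh p 0 = (if p = 0 then 1 else 0)"
| "gh p (Suc n) = (\<theta> + real p * \<delta>) * gh p n + (\<Sum>l\<in>{1..p}. kk l * nb * gh (p - l) n)"

lemma gh_nonneg: "gh p n \<ge> 0"
proof (induction n arbitrary: p)
  case 0 then show ?case by simp
next
  case (Suc n)
  then show ?case using theta_nonneg delta nb_nonneg kk_nonneg
    by (auto intro!: add_nonneg_nonneg mult_nonneg_nonneg sum_nonneg)
qed

lemma gam_nonneg: "i \<in> PH \<Longrightarrow> gam p n i \<ge> 0"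
proof (induction n arbitrary: p i)
  case 0 then show ?case by simp
next
  case (Suc n)
  have "(Am i j + (if i = j then real p * \<delta> else 0)) * gam p n j \<ge> 0" if "j \<in> PH" for j
    using Suc Am_nonneg[of i j] that delta by (auto intro!: mult_nonneg_nonneg add_nonneg_nonneg)
  moreover have "kk l * b1 i j * gam (p - l) n j \<ge> 0" if "j \<in> PH" for j l
    using Suc b1_nonneg[of i j] that kk_pos[of l] by (auto intro!: mult_nonneg_nonneg)
  ultimately show ?case by (auto intro!: add_nonneg_nonneg sum_nonneg)
qed

lemma gam_le_gh: "i \<in> PH \<Longrightarrow> gam p n i \<le> gh p n"
proof (induction n arbitrary: p i)
  case 0 then show ?case by simp
next
  case (Suc n)
  have "(\<Sum>j\<in>PH. (Am i j + (if i = j then real p * \<delta> else 0)) * gam p n j)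
     \<le> (\<Sum>j\<in>PH. (Am i j + (if i = j then real p * \<delta> else 0)) * gh p n)"
    using Suc Am_nonneg delta by (intro sum_mono mult_left_mono) (auto intro!: add_nonneg_nonneg)
  also have "\<dots> = (\<theta> + real p * \<delta>) * gh p n"
    using Suc.prems Am_rowsum[of i] by (simp add: sum_distrib_right[symmetric] sum.distrib)
  finally have 1: "(\<Sum>j\<in>PH. (Am i j + (if i = j then real p * \<delta> else 0)) * gam p n j) \<le> (\<theta> + real p * \<delta>) * gh p n" .
  have "(\<Sum>j\<in>PH. kk l * b1 i j * gam (p - l) n j) \<le> kk l * nb * gh (p - l) n" for l
  proof -
    have "(\<Sum>j\<in>PH. kk l * b1 i j * gam (p - l) n j) \<le> (\<Sum>j\<in>PH. kk l * b1 i j * gh (p - l) n)"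
      using Suc kk_pos[of l] b1_nonneg by (intro sum_mono mult_left_mono) (auto intro!: mult_nonneg_nonneg less_imp_le)
    also have "\<dots> = kk l * bsum i * gh (p - l) n" by (simp add: bsum_def sum_distrib_left sum_distrib_right)
    also have "\<dots> \<le> kk l * nb * gh (p - l) n"
      using bsum_le_nb[OF Suc.prems] kk_pos[of l] gh_nonneg[of "p - l" n]
      by (intro mult_right_mono mult_left_mono) auto
    finally show ?thesis .
  qed
  then have 2: "(\<Sum>l\<in>{1..p}. \<Sum>j\<in>PH. kk l * b1 i j * gam (p - l) n j) \<le> (\<Sum>l\<in>{1..p}. kk l * nb * gh (p - l) n)"
    by (intro sum_mono)
  show ?case using 1 2 by simp
qed

definition "RR P = \<theta> + real P * \<delta> + (\<Sum>l\<in>{1..P}. kk l) * nb + 1"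

lemma gh_bound: "p \<le> P \<Longrightarrow> gh p n \<le> RR P ^ n"
proof (induction n arbitrary: p)
  case 0 then show ?case by simp
next
  case (Suc n)
  have R1: "RR P \<ge> 1" unfolding RR_def using theta_nonneg delta nb_nonneg kk_nonneg
    by (auto intro!: add_nonneg_nonneg mult_nonneg_nonneg sum_nonneg)
  have "(\<theta> + real p * \<delta>) * gh p n \<le> (\<theta> + real P * \<delta>) * RR P ^ n"
    using Suc theta_nonneg delta gh_nonneg[of p n]
    by (intro mult_mono) (auto intro!: add_nonneg_nonneg mult_nonneg_nonneg)
  moreover have "(\<Sum>l\<in>{1..p}. kk l * nb * gh (p - l) n) \<le> (\<Sum>l\<in>{1..P}. kk l * nb * RR P ^ n)"
  proof -
    have "(\<Sum>l\<in>{1..p}. kk l * nb * gh (p - l) n) \<le> (\<Sum>l\<in>{1..p}. kk l * nb * RR P ^ n)"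
      using Suc kk_nonneg nb_nonneg by (intro sum_mono mult_left_mono) (auto intro!: mult_nonneg_nonneg)
    also have "\<dots> \<le> (\<Sum>l\<in>{1..P}. kk l * nb * RR P ^ n)"
      using Suc.prems kk_nonneg nb_nonneg R1
      by (intro sum_mono2) (auto intro!: mult_nonneg_nonneg)
    finally show ?thesis .
  qed
  moreover have "(\<Sum>l\<in>{1..P}. kk l * nb * RR P ^ n) = (\<Sum>l\<in>{1..P}. kk l) * nb * RR P ^ n"
    by (simp add: sum_distrib_right)
  ultimately have "gh p (Suc n) \<le> (\<theta> + real P * \<delta> + (\<Sum>l\<in>{1..P}. kk l) * nb) * RR P ^ n"
    by (simp add: distrib_right)
  also have "\<dots> \<le> RR P * RR P ^ n" using R1 by (intro mult_right_mono) (auto simp: RR_def)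
  finally show ?case by simp
qed

lemma RR_nonneg: "RR P \<ge> 0" unfolding RR_def using theta_nonneg delta nb_nonneg kk_nonneg
    by (auto intro!: add_nonneg_nonneg mult_nonneg_nonneg sum_nonneg)

lemma sbound_gh: "sbound (gh p)"
proof -
  have "\<forall>n. \<bar>gh p n\<bar> \<le> 1 * RR p ^ n" using gh_bound[of p p] gh_nonneg[of p] by simp
  then show ?thesis unfolding sbound_def using RR_nonneg by blast
qed

lemma sbound_gam: "i \<in> PH \<Longrightarrow> sbound (\<lambda>n. gam p n i)"
proof -
  assume i: "i \<in> PH"
  obtain C R where "R \<ge> 0" "\<And>n. \<bar>gh p n\<bar> \<le> C * R ^ n" using sbound_gh[of p] by (auto simp: sbound_def)
  moreover have "\<bar>gam p n i\<bar> \<le> \<bar>gh p n\<bar>" for n using gam_nonneg[OF i] gam_le_gh[OF i] gh_nonneg by simp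
  ultimately show ?thesis unfolding sbound_def by (meson order_trans)
qed

end


lemma sbound_cmult: "sbound f \<Longrightarrow> sbound (\<lambda>n. c * f n)"
proof -
  assume "sbound f"
  then obtain C R where R: "R \<ge> 0" "\<And>n. \<bar>f n\<bar> \<le> C * R ^ n" by (auto simp: sbound_def)
  have "\<bar>c * f n\<bar> \<le> (\<bar>c\<bar> * C) * R ^ n" for n
    using R(2)[of n] by (simp add: abs_mult mult.assoc mult_left_mono)
  then show ?thesis using R(1) unfolding sbound_def by blast
qed

lemma sbound_add: "sbound f \<Longrightarrow> sbound g \<Longrightarrow> sbound (\<lambda>n. f n + g n)"
proof -
  assume "sbound f" "sbound g"
  then obtain C R D S where R: "R \<ge> 0" "\<And>n. \<bar>f n\<bar> \<le> C * R ^ n" and S: "S \<ge> 0" "\<And>n. \<bar>g n\<bar> \<le> D * S ^ n"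
    by (auto simp: sbound_def)
  have "\<bar>f n + g n\<bar> \<le> (\<bar>C\<bar> + \<bar>D\<bar>) * (max R S) ^ n" for n
  proof -
    have "C * R ^ n \<le> \<bar>C\<bar> * max R S ^ n" using R(1)
      by (intro order_trans[OF abs_ge_self[of "C * R ^ n"]]) (auto simp: abs_mult intro!: mult_left_mono power_mono)
    moreover have "D * S ^ n \<le> \<bar>D\<bar> * max R S ^ n" using S(1)
      by (intro order_trans[OF abs_ge_self[of "D * S ^ n"]]) (auto simp: abs_mult intro!: mult_left_mono power_mono)
    ultimately show ?thesis using R(2)[of n] S(2)[of n] by (simp add: algebra_simps) linarith
  qed
  then show ?thesis unfolding sbound_def using R(1) S(1) by (meson max.coboundedI1)
qed

lemma sbound_sum: "finite A \<Longrightarrow> (\<And>i. i \<in> A \<Longrightarrow> sbound (f i)) \<Longrightarrow> sbound (\<lambda>n. \<Sum>i\<in>A. f i n)"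
proof (induction A rule: finite_induct)
  case empty
  then show ?case unfolding sbound_def by (intro exI[of _ 0] exI[of _ 0]) simp
next
  case (insert x F)
  then show ?case by (simp add: sbound_add)
qed

context qm begin

definition "gs p i t = ser (\<lambda>n. gam p n i) t"

definition "dgs p i t = (\<Sum>j\<in>PH. (Am i j + (if i = j then real p * \<delta> else 0)) * gs p j t)
     + (\<Sum>l\<in>{1..p}. \<Sum>j\<in>PH. kk l * b1 i j * gs (p - l) j t)"

lemma gs_deriv: "i \<in> PH \<Longrightarrow> ((\<lambda>t. gs p i t) has_real_derivative dgs p i t) (at t)"
proof -
  assume i: "i \<in> PH"
  have sb: "sbound (\<lambda>n. c * gam q n j)" if "j \<in> PH" for c q j
    using that by (intro sbound_cmult sbound_gam)
  have e1: "ser (\<lambda>n. \<Sum>j\<in>PH. c j * gam q n j) t = (\<Sum>j\<in>PH. c j * gs q j t)" for c q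
  proof -
    have "ser (\<lambda>n. \<Sum>j\<in>PH. c j * gam q n j) t = (\<Sum>j\<in>PH. ser (\<lambda>n. c j * gam q n j) t)"
      by (intro ser_sum sb) auto
    also have "\<dots> = (\<Sum>j\<in>PH. c j * gs q j t)"
      by (intro sum.cong refl) (simp add: gs_def ser_cmult sbound_gam)
    finally show ?thesis .
  qed
  have e2: "ser (\<lambda>n. \<Sum>l\<in>{1..p}. \<Sum>j\<in>PH. kk l * b1 i j * gam (p - l) n j) t
     = (\<Sum>l\<in>{1..p}. \<Sum>j\<in>PH. kk l * b1 i j * gs (p - l) j t)"
  proof -
    have "ser (\<lambda>n. \<Sum>l\<in>{1..p}. \<Sum>j\<in>PH. kk l * b1 i j * gam (p - l) n j) t
       = (\<Sum>l\<in>{1..p}. ser (\<lambda>n. \<Sum>j\<in>PH. kk l * b1 i j * gam (p - l) n j) t)"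
      by (intro ser_sum sbound_sum sb) auto
    also have "\<dots> = (\<Sum>l\<in>{1..p}. \<Sum>j\<in>PH. kk l * b1 i j * gs (p - l) j t)"
      by (intro sum.cong refl e1)
    finally show ?thesis .
  qed
  have "ser (\<lambda>n. gam p (Suc n) i) t = dgs p i t"
    unfolding gam.simps dgs_def
    by (subst ser_add) (auto intro!: sbound_sum sb simp only: e1[of "\<lambda>j. Am i j + (if i = j then real p * \<delta> else 0)" p] e2)
  then show ?thesis using ser_deriv[OF sbound_gam[OF i], of p t] unfolding gs_def by simp
qed

lemma gs_0: "gs p i 0 = (if p = 0 then 1 else 0)"
  by (simp add: gs_def ser_0)

lemma gs_nonneg: "i \<in> PH \<Longrightarrow> t \<ge> 0 \<Longrightarrow> gs p i t \<ge> 0"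
  unfolding gs_def using gam_nonneg by (intro ser_nonneg sbound_gam) auto

lemma gs_cont: "i \<in> PH \<Longrightarrow> continuous_on S (gs p i)"
  unfolding gs_def[abs_def] using ser_cont[OF sbound_gam] by auto

lemma dgs_cont: "i \<in> PH \<Longrightarrow> continuous_on S (dgs p i)"
  unfolding dgs_def[abs_def] by (intro continuous_intros gs_cont) auto

definition "Uf m x t = (case x of (i, k) \<Rightarrow>
   if i \<in> PH then exp (- (\<theta> + real m * \<delta>) * t) * Vf m (\<lambda>l j. gs (m - l) j t) (i, k) else 0)"

definition "dU m x t = (case x of (i, k) \<Rightarrow>
   exp (- (\<theta> + real m * \<delta>) * t) * (\<Sum>l\<le>m. real (k choose l) * dgs (m - l) i t)
   - (\<theta> + real m * \<delta>) * Uf m x t)"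

lemma Uf_deriv: "i \<in> PH \<Longrightarrow> ((\<lambda>t. Uf m (i, k) t) has_real_derivative dU m (i, k) t) (at t)"
proof -
  assume i: "i \<in> PH"
  have "((\<lambda>t. exp (- (\<theta> + real m * \<delta>) * t) * (\<Sum>l\<le>m. real (k choose l) * gs (m - l) i t))
     has_real_derivative
     (exp (- (\<theta> + real m * \<delta>) * t) * (- (\<theta> + real m * \<delta>)) * (\<Sum>l\<le>m. real (k choose l) * gs (m - l) i t)
      + exp (- (\<theta> + real m * \<delta>) * t) * (\<Sum>l\<le>m. real (k choose l) * dgs (m - l) i t))) (at t)"
    by (auto intro!: derivative_eq_intros gs_deriv[OF i] DERIV_sum simp: algebra_simps)
  then show ?thesis using i by (simp add: Uf_def dU_def Vf_def algebra_simps)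
qed

lemma Uf_nonneg: "t \<ge> 0 \<Longrightarrow> Uf m x t \<ge> 0"
  by (auto simp: Uf_def Vf_def split: prod.split intro!: mult_nonneg_nonneg sum_nonneg gs_nonneg)

lemma Uf_0: "i \<in> PH \<Longrightarrow> Uf m (i, k) 0 = real (k choose m)"
proof -
  assume "i \<in> PH"
  then have "Uf m (i, k) 0 = (\<Sum>l\<le>m. real (k choose l) * (if m - l = 0 then 1 else 0))"
    by (simp add: Uf_def Vf_def gs_0)
  also have "\<dots> = (\<Sum>l\<in>{m}. real (k choose l))"
    by (rule sum.mono_neutral_cong_right) auto
  finally show ?thesis by simp
qed

lemma Uf_gen:
  assumes i: "i \<in> PH"
  shows "(\<Sum>j\<in>PH - {i}. a i j * Uf m (j, k) t)
        + (\<Sum>j\<in>PH. b1 i j * (\<Sum>r. lam ^ r * Uf m (j, k + r + 1) t))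
        + real k * \<delta> * Uf m (i, k - 1) t = dU m (i, k) t + qv i k * Uf m (i, k) t"
proof -
  define E where "E = exp (- (\<theta> + real m * \<delta>) * t)"
  define G where "G = (\<lambda>l j. gs (m - l) j t)"
  have U: "j \<in> PH \<Longrightarrow> Uf m (j, n) t = E * Vf m G (j, n)" for j n
    by (simp add: Uf_def E_def G_def)
  have S: "j \<in> PH \<Longrightarrow> (\<Sum>r. lam ^ r * Uf m (j, k + r + 1) t)
      = E * (\<Sum>l\<le>m. (\<Sum>p\<le>l. real (k choose (l - p)) * kk p) * G l j)" for j
  proof -
    assume j: "j \<in> PH"
    have "(\<lambda>r. E * (lam ^ r * Vf m G (j, k + r + 1))) sums (E * (\<Sum>l\<le>m. (\<Sum>p\<le>l. real (k choose (l - p)) * kk p) * G l j))"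
      by (intro sums_mult vf_sums)
    then show ?thesis using j by (simp add: U sums_iff mult_ac)
  qed
  have L: "(\<Sum>j\<in>PH - {i}. a i j * Uf m (j, k) t)
        + (\<Sum>j\<in>PH. b1 i j * (\<Sum>r. lam ^ r * Uf m (j, k + r + 1) t))
        + real k * \<delta> * Uf m (i, k - 1) t
      = E * ((\<Sum>j\<in>PH - {i}. a i j * Vf m G (j, k))
        + (\<Sum>j\<in>PH. b1 i j * (\<Sum>l\<le>m. (\<Sum>p\<le>l. real (k choose (l - p)) * kk p) * G l j))
        + real k * \<delta> * Vf m G (i, k - 1))"
  proof -
    have 1: "(\<Sum>j\<in>PH - {i}. a i j * Uf m (j, k) t) = E * (\<Sum>j\<in>PH - {i}. a i j * Vf m G (j, k))"
      by (simp add: sum_distrib_left U mult_ac)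
    have 2: "(\<Sum>j\<in>PH. b1 i j * (\<Sum>r. lam ^ r * Uf m (j, k + r + 1) t))
       = E * (\<Sum>j\<in>PH. b1 i j * (\<Sum>l\<le>m. (\<Sum>p\<le>l. real (k choose (l - p)) * kk p) * G l j))"
      unfolding sum_distrib_left[of E] proof (intro sum.cong refl)
      fix j assume "j \<in> PH"
      then show "b1 i j * (\<Sum>r. lam ^ r * Uf m (j, k + r + 1) t) = E * (b1 i j * (\<Sum>l\<le>m. (\<Sum>p\<le>l. real (k choose (l - p)) * kk p) * G l j))"
        by (subst S) auto
    qed
    show ?thesis unfolding 1 2 using i by (simp add: U algebra_simps)
  qed
  have D: "dgs (m - l) i t - (\<theta> + real m * \<delta>) * G l i
      = (\<Sum>j\<in>PH. Dmat N a b i j * G l j) - real l * \<delta> * G l i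
        + (\<Sum>p\<in>{1..m - l}. \<Sum>j\<in>PH. kk p * b1 i j * G (l + p) j)" if l: "l \<le> m" for l
  proof -
    have "(\<Sum>j\<in>PH. (Am i j + (if i = j then real (m - l) * \<delta> else 0)) * gs (m - l) j t)
        = (\<Sum>j\<in>PH. Dmat N a b i j * G l j) + (\<theta> + real (m - l) * \<delta>) * G l i"
    proof -
      have "(\<Sum>j\<in>PH. (Am i j + (if i = j then real (m - l) * \<delta> else 0)) * gs (m - l) j t)
         = (\<Sum>j\<in>PH. Dmat N a b i j * gs (m - l) j t + (if i = j then (\<theta> + real (m - l) * \<delta>) * gs (m - l) j t else 0))"
        by (intro sum.cong refl) (auto simp: Am_def algebra_simps)
      also have "\<dots> = (\<Sum>j\<in>PH. Dmat N a b i j * G l j) + (\<theta> + real (m - l) * \<delta>) * G l i"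
        using i by (simp add: sum.distrib G_def)
      finally show ?thesis .
    qed
    moreover have "(\<Sum>p\<in>{1..m - l}. \<Sum>j\<in>PH. kk p * b1 i j * gs (m - l - p) j t)
        = (\<Sum>p\<in>{1..m - l}. \<Sum>j\<in>PH. kk p * b1 i j * G (l + p) j)"
      by (simp add: G_def diff_diff_add)
    ultimately show ?thesis using l by (simp add: dgs_def of_nat_diff algebra_simps)
  qed
  have aux: "(\<Sum>l\<le>m. cc l * (d l - c * g l)) = (\<Sum>l\<le>m. cc l * d l) - c * (\<Sum>l\<le>m. cc l * g l)"
    for cc d g :: "nat \<Rightarrow> real" and c
    by (simp add: sum_subtractf sum_distrib_left right_diff_distrib mult_ac)
  have "dU m (i, k) t = E * ((\<Sum>l\<le>m. real (k choose l) * dgs (m - l) i t) - (\<theta> + real m * \<delta>) * (\<Sum>l\<le>m. real (k choose l) * G l i))"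
    using i by (simp add: dU_def U E_def Vf_def right_diff_distrib mult_ac)
  also have "\<dots> = E * (\<Sum>l\<le>m. real (k choose l) * (dgs (m - l) i t - (\<theta> + real m * \<delta>) * G l i))"
    by (simp only: aux)
  finally have "dU m (i, k) t = E * (\<Sum>l\<le>m. real (k choose l) * (dgs (m - l) i t - (\<theta> + real m * \<delta>) * G l i))" .
  also have "\<dots> = E * (\<Sum>l\<le>m. real (k choose l) * ((\<Sum>j\<in>PH. Dmat N a b i j * G l j) - real l * \<delta> * G l i
        + (\<Sum>p\<in>{1..m - l}. \<Sum>j\<in>PH. kk p * b1 i j * G (l + p) j)))"
    by (intro arg_cong[where f="\<lambda>x. E * x"] sum.cong refl) (simp add: D)
  also have "\<dots> = E * ((\<Sum>j\<in>PH - {i}. a i j * Vf m G (j, k))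
        + (\<Sum>j\<in>PH. b1 i j * (\<Sum>l\<le>m. (\<Sum>p\<le>l. real (k choose (l - p)) * kk p) * G l j))
        + real k * \<delta> * Vf m G (i, k - 1) - qv i k * Vf m G (i, k))"
    by (simp only: gen_alg[OF i])
  finally show ?thesis unfolding L using i by (simp add: U algebra_simps)
qed

end


context qm begin

definition Kop :: "(nat \<times> nat \<Rightarrow> real \<Rightarrow> ennreal) \<Rightarrow> nat \<times> nat \<Rightarrow> real \<Rightarrow> ennreal" where
  "Kop G x t = (\<integral>\<^sup>+ s. indicator {0..t} s * ennreal (exp (- qout N a b \<delta> x * s))
           * (\<integral>\<^sup>+ z. ennreal (rate N a b \<delta> x z) * G z (t - s) \<partial>count_space UNIV) \<partial>lborel)"

definition Phi :: "(nat \<times> nat \<Rightarrow> ennreal) \<Rightarrow> (nat \<times> nat \<Rightarrow> real \<Rightarrow> ennreal) \<Rightarrow> nat \<times> nat \<Rightarrow> real \<Rightarrow> ennreal" where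
  "Phi g G x t = ennreal (exp (- qout N a b \<delta> x * t)) * g x + Kop G x t"

lemma Uf_cont: "i \<in> PH \<Longrightarrow> continuous_on S (Uf m (i, k))"
  using Uf_deriv by (meson DERIV_continuous continuous_at_imp_continuous_on)

lemma dU_cont: "i \<in> PH \<Longrightarrow> continuous_on S (dU m (i, k))"
  unfolding dU_def[abs_def] by (auto intro!: continuous_intros dgs_cont Uf_cont)

lemma Uf_summable: "j \<in> PH \<Longrightarrow> summable (\<lambda>r. lam ^ r * Uf m (j, k + r + 1) t)"
proof -
  assume j: "j \<in> PH"
  have "summable (\<lambda>r. exp (- (\<theta> + real m * \<delta>) * t) * (lam ^ r * Vf m (\<lambda>l j. gs (m - l) j t) (j, k + r + 1)))"
    by (intro summable_mult sums_summable[OF vf_sums])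
  then show ?thesis using j by (simp add: Uf_def mult_ac)
qed

lemma Uf_inner:
  assumes i: "i \<in> PH" and t: "t \<ge> 0"
  shows "(\<integral>\<^sup>+ z. ennreal (rate N a b \<delta> (i, k) z) * ennreal (Uf m z t) \<partial>count_space UNIV)
     = ennreal (dU m (i, k) t + qv i k * Uf m (i, k) t)"
  using gen_int[OF i, of "\<lambda>z. Uf m z t" k] Uf_nonneg[OF t] Uf_summable Uf_gen[OF i, of m k t]
  by simp

lemma Uf_gen_nonneg: "i \<in> PH \<Longrightarrow> t \<ge> 0 \<Longrightarrow> dU m (i, k) t + qv i k * Uf m (i, k) t \<ge> 0"
proof -
  assume i: "i \<in> PH" and t: "t \<ge> 0"
  have "0 \<le> (\<Sum>j\<in>PH - {i}. a i j * Uf m (j, k) t)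
        + (\<Sum>j\<in>PH. b1 i j * (\<Sum>r. lam ^ r * Uf m (j, k + r + 1) t))
        + real k * \<delta> * Uf m (i, k - 1) t"
    using i t delta lam0
    by (intro add_nonneg_nonneg sum_nonneg mult_nonneg_nonneg suminf_nonneg Uf_summable Uf_nonneg a_nonneg b1_nonneg)
       (auto intro!: mult_nonneg_nonneg)
  then show ?thesis using Uf_gen[OF i, of m k t] by simp
qed

lemma Phi_Uf:
  assumes i: "i \<in> PH" and t: "t \<ge> 0"
  shows "Phi (\<lambda>z. ennreal (real (snd z choose m))) (\<lambda>z s. ennreal (Uf m z s)) (i, k) t = ennreal (Uf m (i, k) t)"
proof -
  define q where "q = qv i k"
  have q: "qout N a b \<delta> (i, k) = q" using i by (simp add: q_def qout_eq)
  define f where "f s = exp (- q * s) * (dU m (i, k) (t - s) + q * Uf m (i, k) (t - s))" for s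
  define F where "F s = - exp (- q * s) * Uf m (i, k) (t - s)" for s
  have Kop: "Kop (\<lambda>z s. ennreal (Uf m z s)) (i, k) t = (\<integral>\<^sup>+ s\<in>{0..t}. ennreal (f s) \<partial>lborel)"
    unfolding Kop_def q
  proof (intro nn_integral_cong)
    fix s :: real
    show "indicator {0..t} s * ennreal (exp (- q * s)) *
         (\<integral>\<^sup>+ z. ennreal (rate N a b \<delta> (i, k) z) * ennreal (Uf m z (t - s)) \<partial>count_space UNIV)
         = ennreal (f s) * indicator {0..t} s"
    proof (cases "s \<in> {0..t}")
      case True
      then have "t - s \<ge> 0" by simp
      then show ?thesis using True Uf_inner[OF i, of "t - s" k m] Uf_gen_nonneg[OF i, of "t - s" m k]
        by (simp add: f_def q_def ennreal_mult'' mult_ac)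
    qed simp
  qed
  have Fd: "(F has_real_derivative f s) (at s)" for s
    unfolding F_def f_def
    by (rule derivative_eq_intros refl DERIV_chain2[OF Uf_deriv[OF i]] | simp)+
       (simp add: algebra_simps)
  have c1: "continuous_on UNIV (\<lambda>x. dU m (i, k) (t - x))"
    by (rule continuous_on_compose2[OF dU_cont[OF i]]) (auto intro!: continuous_intros)
  have c2: "continuous_on UNIV (\<lambda>x. Uf m (i, k) (t - x))"
    by (rule continuous_on_compose2[OF Uf_cont[OF i]]) (auto intro!: continuous_intros)
  have fm: "f \<in> borel_measurable borel"
    unfolding f_def by (intro borel_measurable_continuous_onI continuous_intros c1 c2)
  have f0: "s \<in> {0..t} \<Longrightarrow> 0 \<le> f s" for s
    unfolding f_def q_def using Uf_gen_nonneg[OF i, of "t - s" m k] by auto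
  have I: "(\<integral>\<^sup>+ s\<in>{0..t}. ennreal (f s) \<partial>lborel) = ennreal (F t - F 0)"
    by (rule nn_integral_FTC_Icc[OF fm _ f0 t]) (use Fd in auto)
  have mono: "F 0 \<le> F t" by (rule deriv_nonneg_imp_mono[OF _ f0 t]) (use Fd in auto)
  have "Phi (\<lambda>z. ennreal (real (snd z choose m))) (\<lambda>z s. ennreal (Uf m z s)) (i, k) t
      = ennreal (exp (- q * t) * real (k choose m)) + ennreal (F t - F 0)"
    unfolding Phi_def Kop I q by (simp add: ennreal_mult)
  also have "\<dots> = ennreal (exp (- q * t) * real (k choose m) + (F t - F 0))"
    using mono by (intro ennreal_plus[symmetric]) auto
  also have "exp (- q * t) * real (k choose m) + (F t - F 0) = Uf m (i, k) t"
    unfolding F_def using Uf_0[OF i, of m k] by simp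
  finally show ?thesis .
qed

end


lemma meas_countsum:
  fixes F :: "nat \<times> nat \<Rightarrow> 'a \<Rightarrow> ennreal"
  assumes "\<And>z. (\<lambda>s. F z s) \<in> borel_measurable M"
  shows "(\<lambda>s. \<integral>\<^sup>+ z. F z s \<partial>count_space UNIV) \<in> borel_measurable M"
proof -
  have "bij_betw prod_decode UNIV UNIV" using bij_prod_decode by (simp add: bij_def)
  then have e: "(\<integral>\<^sup>+ z. F z s \<partial>count_space UNIV) = (\<Sum>i. F (prod_decode i) s)" for s
    using nn_integral_bij_count_space[of prod_decode UNIV UNIV "\<lambda>z. F z s"]
    by (simp add: nn_integral_count_space_nat)
  show ?thesis unfolding e by (intro borel_measurable_suminf_order assms)
qed

context qm begin

lemma Pit_meas: "(\<lambda>t. Pit n a b \<delta> N x y t) \<in> borel_measurable borel"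
proof (induction n arbitrary: x y)
  case 0
  then show ?case by simp
next
  case (Suc n)
  have m1: "(\<lambda>(t, s). indicator {0..t} s * ennreal (exp (- qout N a b \<delta> x * s))
        * (\<integral>\<^sup>+ z. ennreal (rate N a b \<delta> x z) * Pit n a b \<delta> N z y (t - s) \<partial>count_space UNIV))
      \<in> borel_measurable (borel \<Otimes>\<^sub>M lborel)"
  proof -
    have i: "(\<lambda>(t::real, s::real). indicator {0..t} s :: ennreal) \<in> borel_measurable (borel \<Otimes>\<^sub>M lborel)"
    proof -
      have "(\<lambda>(t::real, s::real). indicator {0..t} s :: ennreal) = (\<lambda>p. if 0 \<le> snd p \<and> snd p \<le> fst p then 1 else 0)"
        by (auto simp: indicator_def)
      also have "\<dots> \<in> borel_measurable (borel \<Otimes>\<^sub>M lborel)" by measurable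
      finally show ?thesis .
    qed
    have e: "(\<lambda>p::real \<times> real. ennreal (exp (- qout N a b \<delta> x * snd p))) \<in> borel_measurable (borel \<Otimes>\<^sub>M lborel)"
      by measurable
    have c: "(\<lambda>p::real \<times> real. \<integral>\<^sup>+ z. ennreal (rate N a b \<delta> x z) * Pit n a b \<delta> N z y (fst p - snd p) \<partial>count_space UNIV)
       \<in> borel_measurable (borel \<Otimes>\<^sub>M lborel)"
    proof (rule meas_countsum)
      fix z
      have "(\<lambda>p::real \<times> real. Pit n a b \<delta> N z y (fst p - snd p)) \<in> borel_measurable (borel \<Otimes>\<^sub>M lborel)"
        using Suc.IH[of z y] by measurable
      then show "(\<lambda>p::real \<times> real. ennreal (rate N a b \<delta> x z) * Pit n a b \<delta> N z y (fst p - snd p)) \<in> borel_measurable (borel \<Otimes>\<^sub>M lborel)"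
        by measurable
    qed
    show ?thesis using i e c by (simp add: case_prod_beta')
  qed
  show ?case
    unfolding Pit.simps
    by (intro borel_measurable_add lborel.borel_measurable_nn_integral m1) (auto intro!: borel_measurable_continuous_onI continuous_intros)
qed


lemma Pit_mono: "Pit n a b \<delta> N x y t \<le> Pit (Suc n) a b \<delta> N x y t"
proof (induction n arbitrary: x y t)
  case 0
  then show ?case by simp
next
  case (Suc n)
  show ?case
    apply (subst Pit.simps(2)[of n a b \<delta> N x y t])
    apply (subst Pit.simps(2)[of "Suc n" a b \<delta> N x y t])
    apply (intro add_mono order_refl nn_integral_mono mult_left_mono Suc.IH)
    apply auto
    done
qed

lemma Pit_incseq: "incseq (\<lambda>n. Pit n a b \<delta> N x y t)"
  using Pit_mono by (simp add: incseq_Suc_iff)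

lemma count_single: "(\<integral>\<^sup>+ y. (if x = y then c else 0) * g y \<partial>count_space UNIV) = c * (g x :: ennreal)"
proof -
  have "(\<integral>\<^sup>+ y. (if x = y then c else 0) * g y \<partial>count_space UNIV) = (\<integral>\<^sup>+ y. (c * g x) * indicator {x} y \<partial>count_space UNIV)"
    by (intro nn_integral_cong) (auto simp: indicator_def)
  also have "\<dots> = c * g x" by (simp add: nn_integral_cmult_indicator)
  finally show ?thesis .
qed

lemma Pit_link: "(\<integral>\<^sup>+ y. Pit n a b \<delta> N x y t * g y \<partial>count_space UNIV) = (Phi g ^^ n) (\<lambda>_ _. 0) x t"
proof (induction n arbitrary: x t)
  case 0
  then show ?case by simp
next
  case (Suc n)
  define q where "q = qout N a b \<delta> x"
  define H where "H s y = indicator {0..t} s * ennreal (exp (- q * s))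
           * (\<integral>\<^sup>+ z. ennreal (rate N a b \<delta> x z) * Pit n a b \<delta> N z y (t - s) \<partial>count_space UNIV)" for s y
  have Hm0: "(\<lambda>s. H s y) \<in> borel_measurable lborel" for y
  proof -
    have "(\<lambda>s. \<integral>\<^sup>+ z. ennreal (rate N a b \<delta> x z) * Pit n a b \<delta> N z y (t - s) \<partial>count_space UNIV) \<in> borel_measurable borel"
    proof (rule meas_countsum)
      fix z
      have "(\<lambda>s. Pit n a b \<delta> N z y (t - s)) \<in> borel_measurable borel"
        using Pit_meas[of n z y] by measurable
      then show "(\<lambda>s. ennreal (rate N a b \<delta> x z) * Pit n a b \<delta> N z y (t - s)) \<in> borel_measurable borel"
        by measurable
    qed
    then show ?thesis unfolding H_def by measurable
  qed
  have Hm: "(\<lambda>s. H s y * g y) \<in> borel_measurable lborel" for y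
    using Hm0[of y] by measurable
  have "(\<integral>\<^sup>+ y. Pit (Suc n) a b \<delta> N x y t * g y \<partial>count_space UNIV)
     = (\<integral>\<^sup>+ y. (if x = y then ennreal (exp (- q * t)) else 0) * g y + (\<integral>\<^sup>+ s. H s y \<partial>lborel) * g y \<partial>count_space UNIV)"
    by (intro nn_integral_cong) (simp add: H_def q_def distrib_right)
  also have "\<dots> = ennreal (exp (- q * t)) * g x + (\<integral>\<^sup>+ y. (\<integral>\<^sup>+ s. H s y \<partial>lborel) * g y \<partial>count_space UNIV)"
    by (subst nn_integral_add) (auto simp: count_single)
  also have "(\<integral>\<^sup>+ y. (\<integral>\<^sup>+ s. H s y \<partial>lborel) * g y \<partial>count_space UNIV)
     = (\<integral>\<^sup>+ y. (\<integral>\<^sup>+ s. H s y * g y \<partial>lborel) \<partial>count_space UNIV)"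
    by (intro nn_integral_cong nn_integral_multc[symmetric] Hm0)
  also have "\<dots> = (\<integral>\<^sup>+ s. (\<integral>\<^sup>+ y. H s y * g y \<partial>count_space UNIV) \<partial>lborel)"
    using Hm by (intro nn_integral_count_space_nn_integral[symmetric]) auto
  also have "\<dots> = Kop ((Phi g ^^ n) (\<lambda>_ _. 0)) x t"
    unfolding Kop_def q_def[symmetric]
  proof (intro nn_integral_cong)
    fix s
    have "(\<integral>\<^sup>+ y. (\<integral>\<^sup>+ z. ennreal (rate N a b \<delta> x z) * Pit n a b \<delta> N z y (t - s) \<partial>count_space UNIV) * g y \<partial>count_space UNIV)
       = (\<integral>\<^sup>+ y. (\<integral>\<^sup>+ z. ennreal (rate N a b \<delta> x z) * (Pit n a b \<delta> N z y (t - s) * g y) \<partial>count_space UNIV) \<partial>count_space UNIV)"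
      by (intro nn_integral_cong) (simp add: nn_integral_multc[symmetric] mult.assoc)
    also have "\<dots> = (\<integral>\<^sup>+ z. (\<integral>\<^sup>+ y. ennreal (rate N a b \<delta> x z) * (Pit n a b \<delta> N z y (t - s) * g y) \<partial>count_space UNIV) \<partial>count_space UNIV)"
      by (intro nn_integral_count_space_nn_integral) auto
    also have "\<dots> = (\<integral>\<^sup>+ z. ennreal (rate N a b \<delta> x z) * (Phi g ^^ n) (\<lambda>_ _. 0) z (t - s) \<partial>count_space UNIV)"
      by (intro nn_integral_cong) (simp add: nn_integral_cmult Suc.IH)
    finally show "(\<integral>\<^sup>+ y. H s y * g y \<partial>count_space UNIV) = indicator {0..t} s * ennreal (exp (- q * s)) *
         (\<integral>\<^sup>+ z. ennreal (rate N a b \<delta> x z) * (Phi g ^^ n) (\<lambda>_ _. 0) z (t - s) \<partial>count_space UNIV)"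
      unfolding H_def by (simp add: nn_integral_cmult mult.assoc)
  qed
  finally have eq: "(\<integral>\<^sup>+ y. Pit (Suc n) a b \<delta> N x y t * g y \<partial>count_space UNIV)
     = ennreal (exp (- q * t)) * g x + Kop ((Phi g ^^ n) (\<lambda>_ _. 0)) x t" .
  have "(Phi g ^^ Suc n) (\<lambda>_ _. 0) x t = Phi g ((Phi g ^^ n) (\<lambda>_ _. 0)) x t" by simp
  also have "\<dots> = ennreal (exp (- q * t)) * g x + Kop ((Phi g ^^ n) (\<lambda>_ _. 0)) x t"
    by (simp only: Phi_def q_def)
  finally show ?case using eq by simp
qed

definition "Fw g x t = (\<integral>\<^sup>+ y. Ptrans a b \<delta> N x y t * g y \<partial>count_space UNIV)"

lemma Fw_SUP: "Fw g x t = (SUP n. (Phi g ^^ n) (\<lambda>_ _. 0) x t)"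
proof -
  have "Fw g x t = (\<integral>\<^sup>+ y. (SUP n. Pit n a b \<delta> N x y t * g y) \<partial>count_space UNIV)"
    unfolding Fw_def Ptrans_def by (simp add: SUP_mult_right_ennreal)
  also have "\<dots> = (SUP n. \<integral>\<^sup>+ y. Pit n a b \<delta> N x y t * g y \<partial>count_space UNIV)"
  proof (intro nn_integral_monotone_convergence_SUP)
    show "incseq (\<lambda>n y. Pit n a b \<delta> N x y t * g y)"
      unfolding incseq_def le_fun_def
      by (intro allI impI mult_right_mono) (use Pit_incseq[of x _ t] in \<open>auto simp: incseq_def\<close>)
  qed auto
  finally show ?thesis by (simp add: Pit_link)
qed

end


context qm begin

lemma rate_bad: "fst z \<notin> PH \<Longrightarrow> rate N a b \<delta> x z = 0"
  unfolding rate_def by (simp only: split_beta if_False)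

lemma Kop_inner_meas:
  assumes "\<And>z. G z \<in> borel_measurable borel"
  shows "(\<lambda>s. indicator {0..t} s * ennreal (exp (- qout N a b \<delta> x * s))
           * (\<integral>\<^sup>+ z. ennreal (rate N a b \<delta> x z) * G z (t - s) \<partial>count_space UNIV)) \<in> borel_measurable lborel"
proof -
  have "(\<lambda>s. \<integral>\<^sup>+ z. ennreal (rate N a b \<delta> x z) * G z (t - s) \<partial>count_space UNIV) \<in> borel_measurable borel"
  proof (rule meas_countsum)
    fix z
    have "(\<lambda>s. G z (t - s)) \<in> borel_measurable borel" using assms[of z] by measurable
    then show "(\<lambda>s. ennreal (rate N a b \<delta> x z) * G z (t - s)) \<in> borel_measurable borel" by measurable
  qed
  then show ?thesis by measurable
qed

lemma Kop_mono:
  assumes "\<And>z s. fst z \<in> PH \<Longrightarrow> 0 \<le> s \<Longrightarrow> s \<le> t \<Longrightarrow> G z s \<le> G' z s"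
  shows "Kop G x t \<le> Kop G' x t"
  unfolding Kop_def
proof (intro nn_integral_mono)
  fix s
  show "indicator {0..t} s * ennreal (exp (- qout N a b \<delta> x * s)) *
         (\<integral>\<^sup>+ z. ennreal (rate N a b \<delta> x z) * G z (t - s) \<partial>count_space UNIV)
       \<le> indicator {0..t} s * ennreal (exp (- qout N a b \<delta> x * s)) *
         (\<integral>\<^sup>+ z. ennreal (rate N a b \<delta> x z) * G' z (t - s) \<partial>count_space UNIV)"
  proof (cases "s \<in> {0..t}")
    case True
    have "(\<integral>\<^sup>+ z. ennreal (rate N a b \<delta> x z) * G z (t - s) \<partial>count_space UNIV)
       \<le> (\<integral>\<^sup>+ z. ennreal (rate N a b \<delta> x z) * G' z (t - s) \<partial>count_space UNIV)"
    proof (intro nn_integral_mono)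
      fix z
      show "ennreal (rate N a b \<delta> x z) * G z (t - s) \<le> ennreal (rate N a b \<delta> x z) * G' z (t - s)"
      proof (cases "fst z \<in> PH")
        case True
        then show ?thesis using assms[of z "t - s"] \<open>s \<in> {0..t}\<close> by (intro mult_left_mono) auto
      qed (simp add: rate_bad)
    qed
    then show ?thesis by (intro mult_left_mono) auto
  qed simp
qed

lemma Kop_add:
  assumes "\<And>z. A z \<in> borel_measurable borel" "\<And>z. B z \<in> borel_measurable borel"
  shows "Kop (\<lambda>z s. A z s + B z s) x t = Kop A x t + Kop B x t"
proof -
  have "Kop (\<lambda>z s. A z s + B z s) x t = (\<integral>\<^sup>+ s. indicator {0..t} s * ennreal (exp (- qout N a b \<delta> x * s))
           * (\<integral>\<^sup>+ z. ennreal (rate N a b \<delta> x z) * A z (t - s) \<partial>count_space UNIV)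
      + indicator {0..t} s * ennreal (exp (- qout N a b \<delta> x * s))
           * (\<integral>\<^sup>+ z. ennreal (rate N a b \<delta> x z) * B z (t - s) \<partial>count_space UNIV) \<partial>lborel)"
    unfolding Kop_def
    by (intro nn_integral_cong) (simp add: distrib_left nn_integral_add)
  also have "\<dots> = Kop A x t + Kop B x t"
    unfolding Kop_def by (intro nn_integral_add Kop_inner_meas assms)
  finally show ?thesis .
qed

lemma Kop_cmult:
  assumes "\<And>z. B z \<in> borel_measurable borel"
  shows "Kop (\<lambda>z s. c * B z s) x t = c * Kop B x t"
proof -
  have "Kop (\<lambda>z s. c * B z s) x t = (\<integral>\<^sup>+ s. c * (indicator {0..t} s * ennreal (exp (- qout N a b \<delta> x * s))
           * (\<integral>\<^sup>+ z. ennreal (rate N a b \<delta> x z) * B z (t - s) \<partial>count_space UNIV)) \<partial>lborel)"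
    unfolding Kop_def
    by (intro nn_integral_cong) (simp add: nn_integral_cmult[symmetric] mult_ac)
  also have "\<dots> = c * Kop B x t"
    unfolding Kop_def by (intro nn_integral_cmult Kop_inner_meas assms)
  finally show ?thesis .
qed

lemma Phin_meas: "(Phi g ^^ n) (\<lambda>_ _. 0) z \<in> borel_measurable borel"
proof -
  have "(\<lambda>t. \<integral>\<^sup>+ y. Pit n a b \<delta> N z y t * g y \<partial>count_space UNIV) \<in> borel_measurable borel"
  proof (rule meas_countsum)
    fix y
    show "(\<lambda>t. Pit n a b \<delta> N z y t * g y) \<in> borel_measurable borel"
      using Pit_meas[of n z y] by measurable
  qed
  then show ?thesis by (simp add: Pit_link)
qed

end


context qm begin

definition "gm m z = ennreal (real (snd z choose m))"

lemma Phi_monoK: "Kop A x t \<le> Kop B x t \<Longrightarrow> Phi g A x t \<le> Phi g B x t"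
  unfolding Phi_def by (rule add_left_mono)

lemma Phin_le_Uf: "fst z \<in> PH \<Longrightarrow> 0 \<le> \<tau> \<Longrightarrow> (Phi (gm m) ^^ n) (\<lambda>_ _. 0) z \<tau> \<le> ennreal (Uf m z \<tau>)"
proof (induction n arbitrary: z \<tau>)
  case 0
  then show ?case by simp
next
  case (Suc n)
  obtain i k where z: "z = (i, k)" by (cases z)
  have "(Phi (gm m) ^^ Suc n) (\<lambda>_ _. 0) z \<tau> = Phi (gm m) ((Phi (gm m) ^^ n) (\<lambda>_ _. 0)) z \<tau>" by simp
  also have "\<dots> \<le> Phi (gm m) (\<lambda>z s. ennreal (Uf m z s)) z \<tau>"
    by (intro Phi_monoK Kop_mono Suc.IH) auto
  also have "\<dots> = ennreal (Uf m z \<tau>)"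
  proof -
    have eq: "gm m = (\<lambda>z. ennreal (real (snd z choose m)))" by (simp add: gm_def fun_eq_iff)
    have "fst z \<in> PH" using Suc.prems by simp
    then show ?thesis unfolding eq using Phi_Uf[of i \<tau> m k] Suc.prems z by simp
  qed
  finally show ?case .
qed

lemma Fw_le_Uf: "fst z \<in> PH \<Longrightarrow> 0 \<le> \<tau> \<Longrightarrow> Fw (gm m) z \<tau> \<le> ennreal (Uf m z \<tau>)"
  unfolding Fw_SUP by (intro SUP_least Phin_le_Uf)

definition "\<beta>w = (1 + 1 / lam) / 2"

lemma beta_gt1: "\<beta>w > 1" using lam0 lam1 by (simp add: \<beta>w_def field_simps)
lemma lam_beta: "lam * \<beta>w < 1" using lam0 lam1 by (simp add: \<beta>w_def field_simps)

definition "\<Lambda>w = (\<Sum>i\<in>PH. asum i + bsum i * \<beta>w / (1 - lam * \<beta>w))"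
definition "\<theta>w = 2 * \<Lambda>w + 1"
definition "\<kappa> = max (1 / 2) (1 / \<beta>w)"

lemma Lam_ge: "i \<in> PH \<Longrightarrow> asum i + bsum i * \<beta>w / (1 - lam * \<beta>w) \<le> \<Lambda>w"
  unfolding \<Lambda>w_def using asum_nonneg bsum_nonneg lam_beta beta_gt1
  by (intro member_le_sum) (auto intro!: add_nonneg_nonneg divide_nonneg_pos mult_nonneg_nonneg)

lemma Lam_nonneg: "\<Lambda>w \<ge> 0"
  unfolding \<Lambda>w_def using asum_nonneg bsum_nonneg lam_beta beta_gt1
  by (intro sum_nonneg) (auto intro!: add_nonneg_nonneg divide_nonneg_pos mult_nonneg_nonneg)

lemma kappa_lt1: "\<kappa> < 1" using beta_gt1 by (simp add: \<kappa>_def)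
lemma kappa_pos: "\<kappa> > 0" by (simp add: \<kappa>_def)

lemma exp_int:
  assumes r: "r > 0" and t: "t \<ge> 0"
  shows "(\<integral>\<^sup>+ s\<in>{0..t}. ennreal (exp (- r * s)) \<partial>lborel) \<le> ennreal (1 / r)"
proof -
  define F where "F s = - exp (- r * s) / r" for s
  have "(\<integral>\<^sup>+ s\<in>{0..t}. ennreal (exp (- r * s)) \<partial>lborel) = ennreal (F t - F 0)"
  proof (rule nn_integral_FTC_Icc)
    show "(\<lambda>s. exp (- r * s)) \<in> borel_measurable borel" by measurable
    fix s show "(F has_real_derivative exp (- r * s)) (at s)"
      unfolding F_def using r by (auto intro!: derivative_eq_intros simp: field_simps)
  qed (use t in auto)
  also have "F t - F 0 \<le> 1 / r" using r by (simp add: F_def field_simps)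
  finally show ?thesis by (simp add: ennreal_leI)
qed

lemma W_sums: "(\<lambda>r. lam ^ r * (c * \<beta>w ^ (k + r + 1))) sums (c * \<beta>w ^ (k + 1) / (1 - lam * \<beta>w))"
proof -
  have "(\<lambda>r. (lam * \<beta>w) ^ r) sums (1 / (1 - lam * \<beta>w))"
    using lam_beta lam0 beta_gt1 by (intro geometric_sums) auto
  then have "(\<lambda>r. c * \<beta>w ^ (k + 1) * (lam * \<beta>w) ^ r) sums (c * \<beta>w ^ (k + 1) * (1 / (1 - lam * \<beta>w)))"
    by (intro sums_mult)
  then show ?thesis by (simp add: power_add power_mult_distrib mult_ac)
qed

lemma KopW:
  assumes i: "i \<in> PH" and t: "t \<ge> 0"
  shows "Kop (\<lambda>z s. ennreal (exp (\<theta>w * s) * \<beta>w ^ snd z)) (i, k) t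
     \<le> ennreal \<kappa> * ennreal (exp (\<theta>w * t) * \<beta>w ^ k)"
proof -
  define q where "q = qv i k"
  define c where "c = \<Lambda>w + real k * \<delta> / \<beta>w"
  have q: "qout N a b \<delta> (i, k) = q" using i by (simp add: q_def qout_eq)
  have qk: "q \<ge> real k * \<delta>"
    unfolding q_def qv_def using asum_nonneg[OF i] bsum_nonneg[OF i] lam1 by (simp add: divide_nonneg_pos)
  have c0: "c \<ge> 0" unfolding c_def using Lam_nonneg beta_gt1 delta by simp
  have rpos: "q + \<theta>w > 0"
  proof -
    have "real k * \<delta> \<ge> 0" using delta by simp
    then show ?thesis using qk Lam_nonneg unfolding \<theta>w_def by linarith
  qed
  have inner: "(\<integral>\<^sup>+ z. ennreal (rate N a b \<delta> (i, k) z) * ennreal (exp (\<theta>w * \<tau>) * \<beta>w ^ snd z) \<partial>count_space UNIV)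
      \<le> ennreal (exp (\<theta>w * \<tau>) * \<beta>w ^ k * c)" for \<tau>
  proof -
    define e where "e = exp (\<theta>w * \<tau>)"
    have e0: "e > 0" by (simp add: e_def)
    have "(\<integral>\<^sup>+ z. ennreal (rate N a b \<delta> (i, k) z) * ennreal (e * \<beta>w ^ snd z) \<partial>count_space UNIV)
      = ennreal ((\<Sum>j\<in>PH - {i}. a i j * (e * \<beta>w ^ k))
        + (\<Sum>j\<in>PH. b1 i j * (\<Sum>r. lam ^ r * (e * \<beta>w ^ (k + r + 1))))
        + real k * \<delta> * (e * \<beta>w ^ (k - 1)))"
      using gen_int[OF i, of "\<lambda>z. e * \<beta>w ^ snd z" k] e0 beta_gt1 sums_summable[OF W_sums]
      by simp
    also have "(\<Sum>j\<in>PH - {i}. a i j * (e * \<beta>w ^ k))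
        + (\<Sum>j\<in>PH. b1 i j * (\<Sum>r. lam ^ r * (e * \<beta>w ^ (k + r + 1))))
        + real k * \<delta> * (e * \<beta>w ^ (k - 1))
      = e * \<beta>w ^ k * (asum i + bsum i * \<beta>w / (1 - lam * \<beta>w)) + real k * \<delta> * (e * \<beta>w ^ (k - 1))"
    proof -
      have "(\<Sum>r. lam ^ r * (e * \<beta>w ^ (k + r + 1))) = e * \<beta>w ^ (k + 1) / (1 - lam * \<beta>w)"
        using W_sums by (simp add: sums_iff)
      then show ?thesis
        by (simp add: asum_def bsum_def sum_distrib_left sum_distrib_right sum_divide_distrib algebra_simps)
    qed
    also have "\<dots> \<le> e * \<beta>w ^ k * c"
    proof -
      have "e * \<beta>w ^ k * (asum i + bsum i * \<beta>w / (1 - lam * \<beta>w)) \<le> e * \<beta>w ^ k * \<Lambda>w"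
        using Lam_ge[OF i] e0 beta_gt1 by (intro mult_left_mono) auto
      moreover have "real k * \<delta> * (e * \<beta>w ^ (k - 1)) = e * \<beta>w ^ k * (real k * \<delta> / \<beta>w)"
      proof (cases k)
        case (Suc k')
        then show ?thesis using beta_gt1 by (simp add: field_simps)
      qed simp
      ultimately show ?thesis by (simp add: c_def distrib_left)
    qed
    finally show ?thesis by (simp add: e_def ennreal_leI)
  qed
  have "Kop (\<lambda>z s. ennreal (exp (\<theta>w * s) * \<beta>w ^ snd z)) (i, k) t
     \<le> (\<integral>\<^sup>+ s. indicator {0..t} s * ennreal (exp (- q * s)) * ennreal (exp (\<theta>w * (t - s)) * \<beta>w ^ k * c) \<partial>lborel)"
    unfolding Kop_def q by (intro nn_integral_mono mult_left_mono inner) auto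
  also have "\<dots> = (\<integral>\<^sup>+ s. ennreal (exp (\<theta>w * t) * \<beta>w ^ k * c) * (ennreal (exp (- (q + \<theta>w) * s)) * indicator {0..t} s) \<partial>lborel)"
  proof (intro nn_integral_cong)
    fix s
    have "exp (- q * s) * (exp (\<theta>w * (t - s)) * \<beta>w ^ k * c) = exp (\<theta>w * t) * \<beta>w ^ k * c * exp (- (q + \<theta>w) * s)"
      by (simp add: algebra_simps flip: exp_add)
    then have "ennreal (exp (- q * s)) * ennreal (exp (\<theta>w * (t - s)) * \<beta>w ^ k * c)
        = ennreal (exp (\<theta>w * t) * \<beta>w ^ k * c) * ennreal (exp (- (q + \<theta>w) * s))"
    proof -
      have b0: "\<beta>w ^ k \<ge> 0" using beta_gt1 by simp
      have X: "exp (\<theta>w * (t - s)) * \<beta>w ^ k * c \<ge> 0" using c0 b0 by simp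
      have Y: "exp (\<theta>w * t) * \<beta>w ^ k * c \<ge> 0" using c0 b0 by simp
      have "ennreal (exp (- q * s)) * ennreal (exp (\<theta>w * (t - s)) * \<beta>w ^ k * c)
          = ennreal (exp (- q * s) * (exp (\<theta>w * (t - s)) * \<beta>w ^ k * c))"
        by (rule ennreal_mult[symmetric]) (use X in auto)
      also have "\<dots> = ennreal (exp (\<theta>w * t) * \<beta>w ^ k * c * exp (- (q + \<theta>w) * s))"
        by (simp only: \<open>exp (- q * s) * (exp (\<theta>w * (t - s)) * \<beta>w ^ k * c) = exp (\<theta>w * t) * \<beta>w ^ k * c * exp (- (q + \<theta>w) * s)\<close>)
      also have "\<dots> = ennreal (exp (\<theta>w * t) * \<beta>w ^ k * c) * ennreal (exp (- (q + \<theta>w) * s))"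
        by (rule ennreal_mult) (use Y in auto)
      finally show ?thesis .
    qed
    then show "indicator {0..t} s * ennreal (exp (- q * s)) * ennreal (exp (\<theta>w * (t - s)) * \<beta>w ^ k * c)
        = ennreal (exp (\<theta>w * t) * \<beta>w ^ k * c) * (ennreal (exp (- (q + \<theta>w) * s)) * indicator {0..t} s)"
      by (simp add: mult_ac)
  qed
  also have "\<dots> = ennreal (exp (\<theta>w * t) * \<beta>w ^ k * c) * (\<integral>\<^sup>+ s\<in>{0..t}. ennreal (exp (- (q + \<theta>w) * s)) \<partial>lborel)"
    by (intro nn_integral_cmult) measurable
  also have "\<dots> \<le> ennreal (exp (\<theta>w * t) * \<beta>w ^ k * c) * ennreal (1 / (q + \<theta>w))"
    by (intro mult_left_mono exp_int rpos t) auto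
  also have "\<dots> = ennreal (exp (\<theta>w * t) * \<beta>w ^ k * (c / (q + \<theta>w)))"
    using c0 beta_gt1 rpos by (simp add: ennreal_mult'[symmetric] divide_nonneg_pos)
  also have "\<dots> \<le> ennreal (exp (\<theta>w * t) * \<beta>w ^ k * \<kappa>)"
  proof -
    have "c \<le> \<kappa> * (q + \<theta>w)"
    proof -
      have "\<Lambda>w \<le> \<kappa> * (2 * \<Lambda>w + 1)"
      proof -
        have "1 / 2 \<le> \<kappa>" by (simp add: \<kappa>_def)
        then have "(1 / 2) * (2 * \<Lambda>w + 1) \<le> \<kappa> * (2 * \<Lambda>w + 1)"
          using Lam_nonneg by (intro mult_right_mono) auto
        then show ?thesis by simp
      qed
      moreover have "real k * \<delta> / \<beta>w \<le> \<kappa> * q"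
      proof -
        have "real k * \<delta> / \<beta>w = (1 / \<beta>w) * (real k * \<delta>)" by simp
        also have "\<dots> \<le> \<kappa> * (real k * \<delta>)" using delta unfolding \<kappa>_def
          by (intro mult_right_mono) auto
        also have "\<dots> \<le> \<kappa> * q" using qk kappa_pos by (intro mult_left_mono) auto
        finally show ?thesis .
      qed
      ultimately show ?thesis unfolding c_def \<theta>w_def by (simp add: distrib_left)
    qed
    then have "c / (q + \<theta>w) \<le> \<kappa>" using rpos by (simp add: divide_le_eq)
    then show ?thesis using beta_gt1 by (intro ennreal_leI mult_left_mono) auto
  qed
  finally show ?thesis using kappa_pos beta_gt1 by (simp add: ennreal_mult'[symmetric] mult_ac)
qed

end


lemma ser_mono_t:
  assumes "sbound f" "\<And>n. 0 \<le> f n" "0 \<le> s" "s \<le> t"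
  shows "ser f s \<le> ser f t"
  unfolding ser_def using assms sbound_summable[OF assms(1)]
proof (intro suminf_le)
  fix n
  show "f n / fact n * s ^ n \<le> f n / fact n * t ^ n"
    using assms by (intro mult_left_mono power_mono divide_nonneg_pos) auto
qed auto

lemma binom_le_pow:
  fixes \<beta> :: real assumes b: "\<beta> > 1"
  shows "real (k choose l) \<le> \<beta> ^ k / (\<beta> - 1) ^ l"
proof (cases "l \<le> k")
  case True
  have "\<beta> ^ k = ((\<beta> - 1) + 1) ^ k" by simp
  also have "\<dots> = (\<Sum>j\<le>k. real (k choose j) * (\<beta> - 1) ^ j * 1 ^ (k - j))" by (rule binomial_ring)
  also have "\<dots> \<ge> real (k choose l) * (\<beta> - 1) ^ l * 1 ^ (k - l)"
    using True b by (intro member_le_sum) auto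
  finally show ?thesis using b by (simp add: field_simps)
next
  case False
  then have "real (k choose l) = 0" by (simp add: binomial_eq_0)
  moreover have "0 \<le> \<beta> ^ k / (\<beta> - 1) ^ l" using b by simp
  ultimately show ?thesis by linarith
qed

context qm begin

definition "Mg m T = (\<Sum>l\<le>m. ser (gh (m - l)) T / (\<beta>w - 1) ^ l)"

lemma Mg_nonneg: "T \<ge> 0 \<Longrightarrow> Mg m T \<ge> 0"
  unfolding Mg_def using beta_gt1 gh_nonneg
  by (intro sum_nonneg divide_nonneg_pos ser_nonneg sbound_gh) auto

lemma gs_le: "i \<in> PH \<Longrightarrow> 0 \<le> \<tau> \<Longrightarrow> \<tau> \<le> T \<Longrightarrow> gs p i \<tau> \<le> ser (gh p) T"
proof -
  assume i: "i \<in> PH" and t: "0 \<le> \<tau>" "\<tau> \<le> T"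
  have "gs p i \<tau> \<le> ser (gh p) \<tau>"
    unfolding gs_def using gam_le_gh[OF i] t by (intro ser_mono sbound_gam[OF i] sbound_gh) auto
  also have "\<dots> \<le> ser (gh p) T" using t gh_nonneg by (intro ser_mono_t sbound_gh) auto
  finally show ?thesis .
qed

lemma Uf_growth:
  assumes z: "fst z \<in> PH" and t: "0 \<le> \<tau>" "\<tau> \<le> T"
  shows "Uf m z \<tau> \<le> Mg m T * (exp (\<theta>w * \<tau>) * \<beta>w ^ snd z)"
proof -
  obtain i k where zz: "z = (i, k)" by (cases z)
  have i: "i \<in> PH" using z zz by simp
  have th0: "\<theta> + real m * \<delta> \<ge> 0" using theta_nonneg delta by simp
  have "Uf m z \<tau> = exp (- (\<theta> + real m * \<delta>) * \<tau>) * (\<Sum>l\<le>m. real (k choose l) * gs (m - l) i \<tau>)"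
    using i zz by (simp add: Uf_def Vf_def)
  also have "\<dots> \<le> 1 * (\<Sum>l\<le>m. real (k choose l) * gs (m - l) i \<tau>)"
  proof (intro mult_right_mono sum_nonneg mult_nonneg_nonneg)
    have "- (\<theta> + real m * \<delta>) * \<tau> \<le> 0" using th0 t by (intro mult_nonpos_nonneg) auto
    then show "exp (- (\<theta> + real m * \<delta>) * \<tau>) \<le> 1" by simp
  qed (use gs_nonneg[OF i t(1)] in auto)
  also have "\<dots> = (\<Sum>l\<le>m. real (k choose l) * gs (m - l) i \<tau>)" by simp
  also have "\<dots> \<le> (\<Sum>l\<le>m. \<beta>w ^ k / (\<beta>w - 1) ^ l * ser (gh (m - l)) T)"
  proof (intro sum_mono mult_mono)
    fix l
    show "real (k choose l) \<le> \<beta>w ^ k / (\<beta>w - 1) ^ l" by (rule binom_le_pow[OF beta_gt1])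
    show "gs (m - l) i \<tau> \<le> ser (gh (m - l)) T" by (rule gs_le[OF i t])
    show "0 \<le> \<beta>w ^ k / (\<beta>w - 1) ^ l" using beta_gt1 by simp
    show "0 \<le> gs (m - l) i \<tau>" by (rule gs_nonneg[OF i t(1)])
  qed
  also have "\<dots> = \<beta>w ^ k * Mg m T"
    by (simp add: Mg_def sum_distrib_left)
  also have "\<dots> \<le> Mg m T * (exp (\<theta>w * \<tau>) * \<beta>w ^ k)"
  proof -
    have "\<theta>w \<ge> 0" using Lam_nonneg by (simp add: \<theta>w_def)
    then have "1 \<le> exp (\<theta>w * \<tau>)" using t by simp
    then have "\<beta>w ^ k * 1 \<le> \<beta>w ^ k * exp (\<theta>w * \<tau>)" using beta_gt1 by (intro mult_left_mono) auto
    then have "Mg m T * (\<beta>w ^ k * 1) \<le> Mg m T * (\<beta>w ^ k * exp (\<theta>w * \<tau>))"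
      by (rule mult_left_mono[OF _ Mg_nonneg]) (use t in auto)
    then show ?thesis by (simp add: mult_ac)
  qed
  finally show ?thesis using zz by simp
qed

definition "Wf z s = ennreal (exp (\<theta>w * s) * \<beta>w ^ snd z)"

lemma Wf_meas: "Wf z \<in> borel_measurable borel"
  unfolding Wf_def by measurable

lemma Uf_le_Phin:
  assumes "fst z \<in> PH" "0 \<le> \<tau>" "\<tau> \<le> T"
  shows "ennreal (Uf m z \<tau>) \<le> (Phi (gm m) ^^ n) (\<lambda>_ _. 0) z \<tau> + ennreal (\<kappa> ^ n * Mg m T) * Wf z \<tau>"
  using assms
proof (induction n arbitrary: z \<tau>)
  case 0
  have "Uf m z \<tau> \<le> Mg m T * (exp (\<theta>w * \<tau>) * \<beta>w ^ snd z)" using Uf_growth 0 by blast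
  then show ?case unfolding Wf_def using Mg_nonneg[of T m] 0 beta_gt1
    by (simp add: ennreal_mult'[symmetric] ennreal_leI)
next
  case (Suc n)
  obtain i k where zz: "z = (i, k)" by (cases z)
  have i: "i \<in> PH" using Suc.prems zz by simp
  define c where "c = ennreal (\<kappa> ^ n * Mg m T)"
  define P where "P = (Phi (gm m) ^^ n) (\<lambda>_ _. 0)"
  have gm: "gm m = (\<lambda>z. ennreal (real (snd z choose m)))" by (simp add: gm_def fun_eq_iff)
  have "ennreal (Uf m z \<tau>) = Phi (gm m) (\<lambda>z s. ennreal (Uf m z s)) z \<tau>"
    unfolding gm using Phi_Uf[OF i Suc.prems(2), of m k] zz by simp
  also have "\<dots> \<le> Phi (gm m) (\<lambda>z s. P z s + c * Wf z s) z \<tau>"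
    unfolding P_def c_def
    by (intro Phi_monoK Kop_mono Suc.IH) (use Suc.prems in auto)
  also have "\<dots> = ennreal (exp (- qout N a b \<delta> z * \<tau>)) * gm m z + Kop P z \<tau> + c * Kop Wf z \<tau>"
  proof -
    have m1: "(\<lambda>s. c * Wf z s) \<in> borel_measurable borel" for z unfolding Wf_def by measurable
    have "Kop (\<lambda>z s. P z s + c * Wf z s) z \<tau> = Kop P z \<tau> + Kop (\<lambda>z s. c * Wf z s) z \<tau>"
      by (rule Kop_add) (auto simp: P_def Phin_meas m1)
    also have "Kop (\<lambda>z s. c * Wf z s) z \<tau> = c * Kop Wf z \<tau>"
      by (rule Kop_cmult[OF Wf_meas])
    finally show ?thesis by (simp only: Phi_def add.assoc)
  qed
  also have "\<dots> \<le> ennreal (exp (- qout N a b \<delta> z * \<tau>)) * gm m z + Kop P z \<tau> + c * (ennreal \<kappa> * Wf z \<tau>)"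
    using KopW[OF i Suc.prems(2), of k] zz unfolding Wf_def by (intro add_left_mono mult_left_mono) auto
  also have "\<dots> = (Phi (gm m) ^^ Suc n) (\<lambda>_ _. 0) z \<tau> + ennreal (\<kappa> ^ Suc n * Mg m T) * Wf z \<tau>"
  proof -
    have "c * (ennreal \<kappa> * Wf z \<tau>) = ennreal (\<kappa> ^ Suc n * Mg m T) * Wf z \<tau>"
    proof -
      have M0: "0 \<le> \<kappa> ^ n * Mg m T" using kappa_pos Mg_nonneg[of T m] Suc.prems by simp
      have "ennreal (\<kappa> ^ Suc n * Mg m T) = ennreal ((\<kappa> ^ n * Mg m T) * \<kappa>)" by (simp add: mult_ac)
      also have "\<dots> = ennreal (\<kappa> ^ n * Mg m T) * ennreal \<kappa>" by (rule ennreal_mult[OF M0]) (use kappa_pos in simp)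
      finally show ?thesis unfolding c_def by (simp only: mult.assoc)
    qed
    moreover have "(Phi (gm m) ^^ Suc n) (\<lambda>_ _. 0) z \<tau> = ennreal (exp (- qout N a b \<delta> z * \<tau>)) * gm m z + Kop P z \<tau>"
      unfolding P_def by (simp only: funpow.simps comp_def Phi_def)
    ultimately show ?thesis by simp
  qed
  finally show ?case .
qed

lemma Fw_eq_Uf:
  assumes z: "fst z \<in> PH" and t: "0 \<le> \<tau>"
  shows "Fw (gm m) z \<tau> = ennreal (Uf m z \<tau>)"
proof (rule antisym)
  show "Fw (gm m) z \<tau> \<le> ennreal (Uf m z \<tau>)" by (rule Fw_le_Uf[OF z t])
  define w where "w = exp (\<theta>w * \<tau>) * \<beta>w ^ snd z"
  have w0: "w \<ge> 0" using beta_gt1 by (simp add: w_def)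
  have le: "ennreal (Uf m z \<tau>) \<le> Fw (gm m) z \<tau> + ennreal (\<kappa> ^ n * Mg m \<tau> * w)" for n
  proof -
    have "ennreal (Uf m z \<tau>) \<le> (Phi (gm m) ^^ n) (\<lambda>_ _. 0) z \<tau> + ennreal (\<kappa> ^ n * Mg m \<tau>) * Wf z \<tau>"
      by (rule Uf_le_Phin[OF z t order_refl])
    also have "(Phi (gm m) ^^ n) (\<lambda>_ _. 0) z \<tau> \<le> Fw (gm m) z \<tau>"
      unfolding Fw_SUP by (rule SUP_upper) auto
    also have "ennreal (\<kappa> ^ n * Mg m \<tau>) * Wf z \<tau> = ennreal (\<kappa> ^ n * Mg m \<tau> * w)"
      unfolding Wf_def w_def[symmetric] using kappa_pos Mg_nonneg[OF t, of m] w0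
      by (intro ennreal_mult[symmetric]) auto
    finally show ?thesis by simp
  qed
  have "(\<lambda>n. \<kappa> ^ n * Mg m \<tau> * w) \<longlonglongrightarrow> 0 * Mg m \<tau> * w"
    using kappa_pos kappa_lt1 by (intro tendsto_mult_right LIMSEQ_power_zero) auto
  then have "(\<lambda>n. Fw (gm m) z \<tau> + ennreal (\<kappa> ^ n * Mg m \<tau> * w)) \<longlonglongrightarrow> Fw (gm m) z \<tau> + ennreal 0"
    by (intro tendsto_add tendsto_const tendsto_ennrealI) simp
  then show "ennreal (Uf m z \<tau>) \<le> Fw (gm m) z \<tau>"
    using le by (intro LIMSEQ_le_const[where a="ennreal (Uf m z \<tau>)"]) auto
qed

end


lemma sum_choose0: "(\<Sum>l\<le>m. real (0 choose l) * f l) = (f 0 :: real)"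
  by (induction m) auto

context qm begin

lemma Pit_bad: "fst x \<in> PH \<Longrightarrow> fst y \<notin> PH \<Longrightarrow> Pit n a b \<delta> N x y t = 0"
proof (induction n arbitrary: x t)
  case 0
  then show ?case by simp
next
  case (Suc n)
  have xy: "x \<noteq> y" using Suc.prems by auto
  have zero: "ennreal (rate N a b \<delta> x z) * Pit n a b \<delta> N z y \<tau> = 0" for z \<tau>
  proof (cases "fst z \<in> PH")
    case True
    then show ?thesis using Suc.IH[of z \<tau>] Suc.prems by simp
  qed (simp add: rate_bad)
  have "(\<integral>\<^sup>+ z. ennreal (rate N a b \<delta> x z) * Pit n a b \<delta> N z y (t - s) \<partial>count_space UNIV) = 0" for s
    by (simp add: zero)
  then show ?case using xy by simp
qed

lemma Ptrans_bad: "fst x \<in> PH \<Longrightarrow> fst y \<notin> PH \<Longrightarrow> Ptrans a b \<delta> N x y t = 0"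
  unfolding Ptrans_def using Pit_bad by simp

lemma sumB_eq: "i \<in> PH \<Longrightarrow> (\<Sum>j\<in>PH. Bcal a b \<delta> N m i j t) = Fw (gm m) (i, 0) t"
proof -
  assume i: "i \<in> PH"
  have "Fw (gm m) (i, 0) t = (\<integral>\<^sup>+ j. \<integral>\<^sup>+ n. Ptrans a b \<delta> N (i, 0) (j, n) t * gm m (j, n) \<partial>count_space UNIV \<partial>count_space UNIV)"
    unfolding Fw_def using nn_integral_fst_count_space[of "\<lambda>y. Ptrans a b \<delta> N (i, 0) y t * gm m y"] by simp
  also have "\<dots> = (\<integral>\<^sup>+ j. Bcal a b \<delta> N m i j t * indicator PH j \<partial>count_space UNIV)"
  proof (intro nn_integral_cong)
    fix j :: nat
    show "(\<integral>\<^sup>+ n. Ptrans a b \<delta> N (i, 0) (j, n) t * gm m (j, n) \<partial>count_space UNIV) = Bcal a b \<delta> N m i j t * indicator PH j"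
    proof (cases "j \<in> PH")
      case True
      have "(\<integral>\<^sup>+ n. Ptrans a b \<delta> N (i, 0) (j, n) t * gm m (j, n) \<partial>count_space UNIV)
          = (\<Sum>n. Ptrans a b \<delta> N (i, 0) (j, n) t * gm m (j, n))" by (rule nn_integral_count_space_nat)
      also have "\<dots> = Bcal a b \<delta> N m i j t" unfolding Bcal_def gm_def
        by (intro suminf_cong) (simp add: mult.commute ennreal_of_nat_eq_real_of_nat)
      finally show ?thesis using True by simp
    next
      case False
      then show ?thesis using Ptrans_bad[of "(i, 0)" "(j, _)"] i by simp
    qed
  qed
  also have "\<dots> = (\<Sum>j\<in>PH. Bcal a b \<delta> N m i j t)"
    by (subst nn_integral_count_space_indicator[symmetric]) (auto simp: nn_integral_count_space_finite)
  finally show ?thesis by simp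
qed

definition "Fbar m t = (\<Sum>i\<in>PH. \<pi> i * Uf m (i, 0) t)"

lemma piB_eq: "t \<ge> 0 \<Longrightarrow> piB \<pi> a b \<delta> N m t = ennreal (Fbar m t)"
proof -
  assume t: "t \<ge> 0"
  have "piB \<pi> a b \<delta> N m t = (\<Sum>i\<in>PH. ennreal (\<pi> i) * (\<Sum>j\<in>PH. Bcal a b \<delta> N m i j t))"
    unfolding piB_def by (simp add: sum_distrib_left)
  also have "\<dots> = (\<Sum>i\<in>PH. ennreal (\<pi> i * Uf m (i, 0) t))"
  proof (intro sum.cong refl)
    fix i assume i: "i \<in> PH"
    have "(\<Sum>j\<in>PH. Bcal a b \<delta> N m i j t) = ennreal (Uf m (i, 0) t)"
      using sumB_eq[OF i] Fw_eq_Uf[of "(i, 0)" t m] i t by simp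
    then show "ennreal (\<pi> i) * (\<Sum>j\<in>PH. Bcal a b \<delta> N m i j t) = ennreal (\<pi> i * Uf m (i, 0) t)"
      using pi_nonneg[OF i] Uf_nonneg[OF t] by (simp add: ennreal_mult)
  qed
  also have "\<dots> = ennreal (Fbar m t)"
    unfolding Fbar_def using pi_nonneg Uf_nonneg[OF t]
    by (intro sum_ennreal) (auto intro!: mult_nonneg_nonneg)
  finally show ?thesis .
qed

lemma Fbar_deriv: "((Fbar m) has_real_derivative (\<Sum>i\<in>PH. \<pi> i * dU m (i, 0) t)) (at t)"
  unfolding Fbar_def[abs_def] by (intro DERIV_sum DERIV_cmult Uf_deriv) auto

lemma dU_sum_nonneg:
  assumes t: "t \<ge> 0"
  shows "(\<Sum>i\<in>PH. \<pi> i * dU m (i, 0) t) \<ge> 0"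
proof -
  define E where "E = exp (- (\<theta> + real m * \<delta>) * t)"
  define R where "R i = (\<Sum>l\<in>{1..m}. \<Sum>j\<in>PH. kk l * b1 i j * gs (m - l) j t)" for i
  have dUe: "dU m (i, 0) t = E * ((\<Sum>j\<in>PH. Am i j * gs m j t) + R i - \<theta> * gs m i t)" if i: "i \<in> PH" for i
  proof -
    have "(\<Sum>j\<in>PH. (Am i j + (if i = j then real m * \<delta> else 0)) * gs m j t)
        = (\<Sum>j\<in>PH. Am i j * gs m j t) + real m * \<delta> * gs m i t"
    proof -
      have "(\<Sum>j\<in>PH. (Am i j + (if i = j then real m * \<delta> else 0)) * gs m j t)
          = (\<Sum>j\<in>PH. Am i j * gs m j t + (if i = j then real m * \<delta> * gs m j t else 0))"
        by (intro sum.cong refl) (auto simp: distrib_right)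
      also have "\<dots> = (\<Sum>j\<in>PH. Am i j * gs m j t) + real m * \<delta> * gs m i t"
        using i by (simp add: sum.distrib)
      finally show ?thesis .
    qed
    then have dg: "dgs m i t = (\<Sum>j\<in>PH. Am i j * gs m j t) + real m * \<delta> * gs m i t + R i"
      by (simp add: dgs_def R_def)
    have s1: "(\<Sum>l\<le>m. real (0 choose l) * dgs (m - l) i t) = dgs m i t"
      using sum_choose0[where m=m and f="\<lambda>l. dgs (m - l) i t"] by simp
    have s2: "Vf m (\<lambda>l j. gs (m - l) j t) (i, 0) = gs m i t"
      using sum_choose0[where m=m and f="\<lambda>l. gs (m - l) i t"] by (simp add: Vf_def)
    have "dU m (i, 0) t = E * dgs m i t - (\<theta> + real m * \<delta>) * (E * gs m i t)"
      using i unfolding dU_def Uf_def E_def by (simp only: s1 s2 prod.case if_True)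
    then show ?thesis unfolding dg by (simp add: algebra_simps)
  qed
  have A: "(\<Sum>i\<in>PH. \<pi> i * (\<Sum>j\<in>PH. Am i j * gs m j t)) = \<theta> * (\<Sum>j\<in>PH. \<pi> j * gs m j t)"
  proof -
    have "(\<Sum>i\<in>PH. \<pi> i * (\<Sum>j\<in>PH. Am i j * gs m j t)) = (\<Sum>j\<in>PH. (\<Sum>i\<in>PH. \<pi> i * Am i j) * gs m j t)"
      by (simp add: sum_distrib_left sum_distrib_right mult_ac) (rule sum.swap)
    also have "\<dots> = (\<Sum>j\<in>PH. \<theta> * \<pi> j * gs m j t)"
    proof (intro sum.cong refl)
      fix j assume j: "j \<in> PH"
      have "(\<Sum>i\<in>PH. \<pi> i * Am i j) = (\<Sum>i\<in>PH. \<pi> i * Dmat N a b i j) + (\<Sum>i\<in>PH. if i = j then \<pi> i * \<theta> else 0)"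
        unfolding sum.distrib[symmetric] by (intro sum.cong refl) (auto simp: Am_def distrib_left)
      also have "\<dots> = \<theta> * \<pi> j" using j pi_inv[OF j] by simp
      finally show "(\<Sum>i\<in>PH. \<pi> i * Am i j) * gs m j t = \<theta> * \<pi> j * gs m j t" by simp
    qed
    finally show ?thesis by (simp add: sum_distrib_left mult_ac)
  qed
  have "(\<Sum>i\<in>PH. \<pi> i * dU m (i, 0) t) = (\<Sum>i\<in>PH. E * (\<pi> i * (\<Sum>j\<in>PH. Am i j * gs m j t)) + E * (\<pi> i * R i) - E * \<theta> * (\<pi> i * gs m i t))"
    by (intro sum.cong refl) (simp add: dUe algebra_simps)
  also have "\<dots> = E * (\<Sum>i\<in>PH. \<pi> i * (\<Sum>j\<in>PH. Am i j * gs m j t)) + E * (\<Sum>i\<in>PH. \<pi> i * R i) - E * \<theta> * (\<Sum>i\<in>PH. \<pi> i * gs m i t)"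
    by (simp add: sum.distrib sum_subtractf sum_distrib_left)
  also have "\<dots> = E * (\<Sum>i\<in>PH. \<pi> i * R i)" unfolding A by simp
  also have "\<dots> \<ge> 0"
    unfolding E_def R_def using t pi_nonneg gs_nonneg b1_nonneg kk_nonneg
    by (intro mult_nonneg_nonneg sum_nonneg) auto
  finally show ?thesis .
qed

lemma Fbar_mono: "0 \<le> s \<Longrightarrow> s \<le> t \<Longrightarrow> Fbar m s \<le> Fbar m t"
  by (rule deriv_nonneg_imp_mono[OF Fbar_deriv dU_sum_nonneg]) auto

end


lemma tri_swap:
  fixes f :: "nat \<Rightarrow> nat \<Rightarrow> real"
  shows "(\<Sum>l\<in>{1..m}. \<Sum>l'\<in>{1..m - l}. f l l') = (\<Sum>l'\<in>{1..m}. \<Sum>l\<in>{1..m - l'}. f l l')"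
proof -
  have e1: "{1..m - l} = {l' \<in> {1..m}. l + l' \<le> m}" if "l \<in> {1..m}" for l using that by auto
  have e2: "{1..m - l'} = {l. l \<in> {1..m} \<and> l + l' \<le> m}" if "l' \<in> {1..m}" for l' using that by auto
  have "(\<Sum>l\<in>{1..m}. \<Sum>l'\<in>{1..m - l}. f l l') = (\<Sum>l\<in>{1..m}. \<Sum>l'\<in>{l' \<in> {1..m}. l + l' \<le> m}. f l l')"
    by (intro sum.cong refl) (auto simp: set_eq_iff)
  also have "\<dots> = (\<Sum>l'\<in>{1..m}. \<Sum>l | l \<in> {1..m} \<and> l + l' \<le> m. f l l')"
    by (rule sum.swap_restrict) auto
  also have "\<dots> = (\<Sum>l'\<in>{1..m}. \<Sum>l\<in>{1..m - l'}. f l l')"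
    by (intro sum.cong refl) (auto simp: set_eq_iff)
  finally show ?thesis .
qed

lemma poch_sum: "(\<Sum>j\<le>n. pochhammer (x::real) j / fact j) = pochhammer (x + 1) n / fact n"
proof (induction n)
  case 0
  then show ?case by simp
next
  case (Suc n)
  have "(\<Sum>j\<le>Suc n. pochhammer x j / fact j) = pochhammer (x + 1) n / fact n + pochhammer x (Suc n) / fact (Suc n)"
    using Suc by simp
  also have "\<dots> = pochhammer (x + 1) n * (real (Suc n) + x) / fact (Suc n)"
  proof -
    have f: "(fact (Suc n) :: real) = real (Suc n) * fact n" by simp
    have p: "pochhammer x (Suc n) = x * pochhammer (x + 1) n" by (rule pochhammer_rec)
    have pos: "(fact n :: real) > 0" "real (Suc n) > 0" by auto
    show ?thesis unfolding f p using pos by (simp add: field_simps del: of_nat_Suc)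
  qed
  also have "\<dots> = pochhammer (x + 1) (Suc n) / fact (Suc n)"
    by (simp add: pochhammer_Suc algebra_simps)
  finally show ?case .
qed

lemma sm_rec:
  fixes x \<rho> d :: real
  assumes m: "m \<ge> 1"
  shows "real m * d * (1 / fact m * \<rho> ^ m * pochhammer x m)
     = (\<Sum>l\<in>{1..m}. (x * d * \<rho> ^ l) * (1 / fact (m - l) * \<rho> ^ (m - l) * pochhammer x (m - l)))"
proof -
  obtain n where n: "m = Suc n" using m by (cases m) auto
  have "(\<Sum>l\<in>{1..m}. (x * d * \<rho> ^ l) * (1 / fact (m - l) * \<rho> ^ (m - l) * pochhammer x (m - l)))
      = (\<Sum>l\<in>{1..m}. x * d * \<rho> ^ m * (pochhammer x (m - l) / fact (m - l)))"
    by (intro sum.cong refl) (auto simp: power_add[symmetric])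
  also have "\<dots> = x * d * \<rho> ^ m * (\<Sum>l\<in>{1..m}. pochhammer x (m - l) / fact (m - l))"
    by (simp add: sum_distrib_left)
  also have "(\<Sum>l\<in>{1..m}. pochhammer x (m - l) / fact (m - l)) = (\<Sum>j\<le>n. pochhammer x j / fact j)"
    by (rule sum.reindex_bij_witness[where i="\<lambda>j. m - j" and j="\<lambda>l. m - l"]) (auto simp: n)
  also have "\<dots> = pochhammer (x + 1) n / fact n" by (rule poch_sum)
  finally have "(\<Sum>l\<in>{1..m}. (x * d * \<rho> ^ l) * (1 / fact (m - l) * \<rho> ^ (m - l) * pochhammer x (m - l)))
      = x * d * \<rho> ^ m * (pochhammer (x + 1) n / fact n)" .
  moreover have "real m * d * (1 / fact m * \<rho> ^ m * pochhammer x m) = x * d * \<rho> ^ m * (pochhammer (x + 1) n / fact n)"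
  proof -
    have f: "(fact (Suc n) :: real) = real (Suc n) * fact n" by simp
    have p: "pochhammer x (Suc n) = x * pochhammer (x + 1) n" by (rule pochhammer_rec)
    have pos: "(fact n :: real) > 0" "real (Suc n) > 0" by auto
    show ?thesis unfolding n f p using pos by (simp add: field_simps del: of_nat_Suc)
  qed
  ultimately show ?thesis by simp
qed


context qm begin

definition "gl l = kk l * nb"
definition "hs p t = exp (- (\<theta> + real p * \<delta>) * t) * ser (gh p) t"
definition "dhs p t = (\<Sum>l\<in>{1..p}. gl l * exp (- (real l * \<delta>) * t) * hs (p - l) t)"

lemma gl_nonneg: "gl l \<ge> 0" unfolding gl_def using kk_nonneg nb_nonneg by simp

lemma ser_gh_deriv: "((\<lambda>t. ser (gh p) t) has_real_derivative
   ((\<theta> + real p * \<delta>) * ser (gh p) t + (\<Sum>l\<in>{1..p}. gl l * ser (gh (p - l)) t))) (at t)"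
proof -
  have "ser (\<lambda>n. gh p (Suc n)) t = (\<theta> + real p * \<delta>) * ser (gh p) t + (\<Sum>l\<in>{1..p}. gl l * ser (gh (p - l)) t)"
  proof -
    have "ser (\<lambda>n. gh p (Suc n)) t = ser (\<lambda>n. (\<theta> + real p * \<delta>) * gh p n) t + ser (\<lambda>n. \<Sum>l\<in>{1..p}. gl l * gh (p - l) n) t"
      unfolding gh.simps gl_def
      by (intro ser_add sbound_cmult sbound_gh sbound_sum) (auto simp: mult.assoc)
    also have "ser (\<lambda>n. (\<theta> + real p * \<delta>) * gh p n) t = (\<theta> + real p * \<delta>) * ser (gh p) t"
      by (rule ser_cmult[OF sbound_gh])
    also have "ser (\<lambda>n. \<Sum>l\<in>{1..p}. gl l * gh (p - l) n) t = (\<Sum>l\<in>{1..p}. ser (\<lambda>n. gl l * gh (p - l) n) t)"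
      by (intro ser_sum sbound_cmult sbound_gh) auto
    also have "\<dots> = (\<Sum>l\<in>{1..p}. gl l * ser (gh (p - l)) t)"
      by (intro sum.cong refl ser_cmult sbound_gh)
    finally show ?thesis .
  qed
  then show ?thesis using ser_deriv[OF sbound_gh[of p], of t] by simp
qed

lemma hs_deriv: "((hs p) has_real_derivative dhs p t) (at t)"
proof -
  have "((\<lambda>t. exp (- (\<theta> + real p * \<delta>) * t) * ser (gh p) t) has_real_derivative
     exp (- (\<theta> + real p * \<delta>) * t) * (- (\<theta> + real p * \<delta>)) * ser (gh p) t
     + exp (- (\<theta> + real p * \<delta>) * t) * ((\<theta> + real p * \<delta>) * ser (gh p) t + (\<Sum>l\<in>{1..p}. gl l * ser (gh (p - l)) t))) (at t)"
    by (auto intro!: derivative_eq_intros ser_gh_deriv)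
  moreover have "exp (- (\<theta> + real p * \<delta>) * t) * (- (\<theta> + real p * \<delta>)) * ser (gh p) t
     + exp (- (\<theta> + real p * \<delta>) * t) * ((\<theta> + real p * \<delta>) * ser (gh p) t + (\<Sum>l\<in>{1..p}. gl l * ser (gh (p - l)) t))
     = dhs p t"
  proof -
    have "exp (- (\<theta> + real p * \<delta>) * t) * (gl l * ser (gh (p - l)) t) = gl l * exp (- (real l * \<delta>) * t) * hs (p - l) t"
      if "l \<in> {1..p}" for l
    proof -
      have "exp (- (\<theta> + real p * \<delta>) * t) = exp (- (real l * \<delta>) * t) * exp (- (\<theta> + real (p - l) * \<delta>) * t)"
        using that by (simp add: of_nat_diff algebra_simps flip: exp_add)
      then show ?thesis by (simp add: hs_def)
    qed
    then have "exp (- (\<theta> + real p * \<delta>) * t) * (\<Sum>l\<in>{1..p}. gl l * ser (gh (p - l)) t) = dhs p t"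
      unfolding dhs_def sum_distrib_left by (intro sum.cong refl) auto
    then show ?thesis by (simp add: algebra_simps)
  qed
  ultimately show ?thesis unfolding hs_def[abs_def] by simp
qed

lemma gh0: "gh 0 n = \<theta> ^ n"
  by (induction n) auto

lemma hs0: "hs 0 t = 1"
proof -
  have "ser (gh 0) t = exp (\<theta> * t)"
  proof -
    have "(\<lambda>n. (\<theta> * t) ^ n /\<^sub>R fact n) sums exp (\<theta> * t)" by (rule exp_converges)
    then show ?thesis unfolding ser_def gh0 by (simp add: sums_iff power_mult_distrib field_simps)
  qed
  then show ?thesis by (simp add: hs_def flip: exp_add)
qed

lemma hs_nonneg: "t \<ge> 0 \<Longrightarrow> hs p t \<ge> 0"
  unfolding hs_def using gh_nonneg by (intro mult_nonneg_nonneg ser_nonneg sbound_gh) auto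

lemma hs_at0: "hs p 0 = (if p = 0 then 1 else 0)"
  by (simp add: hs_def ser_0)

lemma static: "real m * \<delta> * hs m t = (\<Sum>l\<in>{1..m}. (1 - exp (- (real l * \<delta>) * t)) * gl l * hs (m - l) t)"
proof (induction m arbitrary: t rule: less_induct)
  case (less m)
  define Dm where "Dm t = real m * \<delta> * hs m t - (\<Sum>l\<in>{1..m}. (1 - exp (- (real l * \<delta>) * t)) * gl l * hs (m - l) t)" for t
  have Dd: "(Dm has_real_derivative 0) (at s)" for s
  proof -
    define u where "u l = exp (- (real l * \<delta>) * s)" for l
    have "(Dm has_real_derivative
        real m * \<delta> * dhs m s - (\<Sum>l\<in>{1..m}. (real l * \<delta> * u l) * gl l * hs (m - l) s + (1 - u l) * gl l * dhs (m - l) s)) (at s)"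
      unfolding Dm_def[abs_def] u_def
      by (auto intro!: derivative_eq_intros DERIV_sum hs_deriv simp: algebra_simps)
    moreover have "real m * \<delta> * dhs m s - (\<Sum>l\<in>{1..m}. (real l * \<delta> * u l) * gl l * hs (m - l) s + (1 - u l) * gl l * dhs (m - l) s) = 0"
    proof -
      have A: "(\<Sum>l\<in>{1..m}. (1 - u l) * gl l * dhs (m - l) s)
          = (\<Sum>l'\<in>{1..m}. gl l' * u l' * (real (m - l') * \<delta> * hs (m - l') s))"
      proof -
        have "(\<Sum>l\<in>{1..m}. (1 - u l) * gl l * dhs (m - l) s)
            = (\<Sum>l\<in>{1..m}. \<Sum>l'\<in>{1..m - l}. (1 - u l) * gl l * (gl l' * u l' * hs (m - l - l') s))"
          by (simp add: dhs_def u_def sum_distrib_left)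
        also have "\<dots> = (\<Sum>l'\<in>{1..m}. \<Sum>l\<in>{1..m - l'}. (1 - u l) * gl l * (gl l' * u l' * hs (m - l - l') s))"
          by (rule tri_swap)
        also have "\<dots> = (\<Sum>l'\<in>{1..m}. gl l' * u l' * (\<Sum>l\<in>{1..m - l'}. (1 - u l) * gl l * hs (m - l' - l) s))"
          by (simp add: sum_distrib_left mult_ac add_ac)
        also have "\<dots> = (\<Sum>l'\<in>{1..m}. gl l' * u l' * (real (m - l') * \<delta> * hs (m - l') s))"
        proof (intro sum.cong refl)
          fix l' assume l': "l' \<in> {1..m}"
          then have "m - l' < m" by auto
          from less[OF this, of s]
          show "gl l' * u l' * (\<Sum>l\<in>{1..m - l'}. (1 - u l) * gl l * hs (m - l' - l) s) = gl l' * u l' * (real (m - l') * \<delta> * hs (m - l') s)"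
            by (simp add: u_def)
        qed
        finally show ?thesis .
      qed
      have B: "real m * \<delta> * dhs m s = (\<Sum>l\<in>{1..m}. real m * \<delta> * (gl l * u l * hs (m - l) s))"
        by (simp add: dhs_def u_def sum_distrib_left mult_ac)
      have C: "(\<Sum>l\<in>{1..m}. real m * \<delta> * (gl l * u l * hs (m - l) s)) =
          (\<Sum>l\<in>{1..m}. (real l * \<delta> * u l) * gl l * hs (m - l) s) + (\<Sum>l'\<in>{1..m}. gl l' * u l' * (real (m - l') * \<delta> * hs (m - l') s))"
        by (simp add: sum.distrib[symmetric] of_nat_diff algebra_simps)
      show ?thesis unfolding sum.distrib A B C by simp
    qed
    ultimately show ?thesis by simp
  qed
  have "Dm t = Dm 0" using DERIV_isconst_all[of Dm] Dd by blast
  also have "Dm 0 = 0" by (simp add: Dm_def hs_at0)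
  finally show ?case by (simp add: Dm_def)
qed

definition "sm m = 1 / fact m * (lam / (1 - lam)) ^ m * pochhammer (nb / (\<delta> * lam * (1 - lam))) m"

lemma gl_eq: "l \<ge> 1 \<Longrightarrow> gl l = (nb / (\<delta> * lam * (1 - lam))) * \<delta> * (lam / (1 - lam)) ^ l"
proof -
  assume "l \<ge> 1"
  then obtain n where l: "l = Suc n" by (cases l) auto
  have "(nb / (\<delta> * lam * (1 - lam))) * \<delta> * (lam / (1 - lam)) ^ Suc n = nb * ((\<delta> * lam * lam ^ n) / (\<delta> * lam * ((1 - lam) * (1 - lam) ^ Suc n)))"
    by (simp add: power_divide)
  also have "(\<delta> * lam * lam ^ n) / (\<delta> * lam * ((1 - lam) * (1 - lam) ^ Suc n)) = lam ^ n / ((1 - lam) * (1 - lam) ^ Suc n)"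
    using lam0 lam1 delta by (subst mult_divide_mult_cancel_left) auto
  finally show ?thesis by (simp add: l gl_def kk_def mult_ac)
qed

lemma poch_nonneg: "(x::real) \<ge> 0 \<Longrightarrow> pochhammer x n \<ge> 0"
  by (induction n) (auto simp: pochhammer_Suc)

lemma sm_nonneg: "sm m \<ge> 0"
  unfolding sm_def using lam0 lam1 delta nb_nonneg
  by (intro mult_nonneg_nonneg poch_nonneg divide_nonneg_pos) auto

lemma hs_le_sm: "t \<ge> 0 \<Longrightarrow> hs m t \<le> sm m"
proof (induction m rule: less_induct)
  case (less m)
  show ?case
  proof (cases "m = 0")
    case True
    then show ?thesis by (simp add: hs0 sm_def)
  next
    case False
    then have m1: "m \<ge> 1" by simp
    have "real m * \<delta> * hs m t = (\<Sum>l\<in>{1..m}. (1 - exp (- (real l * \<delta>) * t)) * gl l * hs (m - l) t)"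
      by (rule static)
    also have "\<dots> \<le> (\<Sum>l\<in>{1..m}. gl l * sm (m - l))"
    proof (intro sum_mono)
      fix l assume l: "l \<in> {1..m}"
      have u: "0 \<le> 1 - exp (- (real l * \<delta>) * t)" "1 - exp (- (real l * \<delta>) * t) \<le> 1"
        using less.prems delta by auto
      have "(1 - exp (- (real l * \<delta>) * t)) * gl l * hs (m - l) t \<le> 1 * gl l * sm (m - l)"
        using u gl_nonneg less.IH[of "m - l"] l less.prems hs_nonneg[OF less.prems]
        by (intro mult_mono) (auto intro!: mult_nonneg_nonneg)
      then show "(1 - exp (- (real l * \<delta>) * t)) * gl l * hs (m - l) t \<le> gl l * sm (m - l)" by simp
    qed
    also have "\<dots> = real m * \<delta> * sm m"
    proof -
      have "(\<Sum>l\<in>{1..m}. gl l * sm (m - l)) = (\<Sum>l\<in>{1..m}. ((nb / (\<delta> * lam * (1 - lam))) * \<delta> * (lam / (1 - lam)) ^ l)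
          * (1 / fact (m - l) * (lam / (1 - lam)) ^ (m - l) * pochhammer (nb / (\<delta> * lam * (1 - lam))) (m - l)))"
        by (intro sum.cong refl) (simp add: gl_eq sm_def)
      also have "\<dots> = real m * \<delta> * sm m"
        unfolding sm_def by (rule sm_rec[OF m1, symmetric])
      finally show ?thesis .
    qed
    finally have "real m * \<delta> * hs m t \<le> real m * \<delta> * sm m" .
    then show ?thesis using m1 delta by (simp add: mult_le_cancel_left_pos)
  qed
qed

lemma Uf0_le_hs: "i \<in> PH \<Longrightarrow> t \<ge> 0 \<Longrightarrow> Uf m (i, 0) t \<le> hs m t"
proof -
  assume i: "i \<in> PH" and t: "t \<ge> 0"
  have "Uf m (i, 0) t = exp (- (\<theta> + real m * \<delta>) * t) * gs m i t"
    using i sum_choose0[where m=m and f="\<lambda>l. gs (m - l) i t"] by (simp add: Uf_def Vf_def)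
  also have "\<dots> \<le> exp (- (\<theta> + real m * \<delta>) * t) * ser (gh m) t"
    unfolding gs_def using gam_le_gh[OF i] t by (intro mult_left_mono ser_mono sbound_gam[OF i] sbound_gh) auto
  finally show ?thesis by (simp add: hs_def)
qed

end


context qm begin

lemma Cmat_eq: "r \<ge> 1 \<Longrightarrow> i \<in> PH \<Longrightarrow> j \<in> PH \<Longrightarrow>
   Cmat b r i j = lam ^ (r - 1) / (1 - lam) ^ (r + 1) * b 1 i j"
proof -
  assume r: "r \<ge> 1" and ij: "i \<in> PH" "j \<in> PH"
  have "(\<lambda>k. lam ^ (r - 1) * b 1 i j * (real ((r + k) choose r) * lam ^ k)) sums (lam ^ (r - 1) * b 1 i j * (1 / (1 - lam) ^ (r + 1)))"
    by (intro sums_mult kser) (use lam0 lam1 in auto)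
  moreover have "real ((r + k) choose r) * b (r + k) i j = lam ^ (r - 1) * b 1 i j * (real ((r + k) choose r) * lam ^ k)" for k
  proof -
    have "b (r + k) i j = lam ^ (r + k - 1) * b 1 i j" using geom[of "r + k" i j] r ij by simp
    moreover have "r + k - 1 = (r - 1) + k" using r by simp
    ultimately show ?thesis by (simp add: power_add mult_ac)
  qed
  ultimately have "(\<lambda>k. real ((r + k) choose r) * b (r + k) i j) sums (lam ^ (r - 1) * b 1 i j * (1 / (1 - lam) ^ (r + 1)))"
    by (simp only:)
  then show ?thesis unfolding Cmat_def by (simp add: sums_iff)
qed

lemma Fbar_le: "t \<ge> 0 \<Longrightarrow> Fbar m t \<le> sm m"
proof -
  assume t: "t \<ge> 0"
  have "Fbar m t \<le> (\<Sum>i\<in>PH. \<pi> i * sm m)"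
    unfolding Fbar_def
  proof (intro sum_mono mult_left_mono)
    fix i assume i: "i \<in> PH"
    show "Uf m (i, 0) t \<le> sm m" using Uf0_le_hs[OF i t, of m] hs_le_sm[OF t, of m] by linarith
    show "0 \<le> \<pi> i" using pi_nonneg[OF i] .
  qed
  also have "\<dots> = sm m" using pi_sum by (simp add: sum_distrib_right[symmetric])
  finally show ?thesis .
qed

lemma limit_part: "\<exists>L. (piB \<pi> a b \<delta> N m \<longlongrightarrow> L) at_top \<and> L \<le> ennreal (sm m)"
proof -
  define L where "L = (SUP t\<in>{0..}. ennreal (Fbar m t))"
  have ev: "\<forall>\<^sub>F t in at_top. piB \<pi> a b \<delta> N m t = ennreal (Fbar m t)"
    using eventually_ge_at_top[of "0::real"] by eventually_elim (simp add: piB_eq)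
  have "(piB \<pi> a b \<delta> N m \<longlongrightarrow> L) at_top"
  proof (rule increasing_tendsto)
    show "\<forall>\<^sub>F t in at_top. piB \<pi> a b \<delta> N m t \<le> L"
      using ev eventually_ge_at_top[of "0::real"]
      by eventually_elim (auto simp: L_def intro!: SUP_upper)
  next
    fix x assume "x < L"
    then obtain t0 where t0: "t0 \<in> {0..}" "x < ennreal (Fbar m t0)" unfolding L_def by (auto simp: less_SUP_iff)
    show "\<forall>\<^sub>F t in at_top. x < piB \<pi> a b \<delta> N m t"
      using ev eventually_ge_at_top[of t0]
    proof eventually_elim
      case (elim t)
      have "ennreal (Fbar m t0) \<le> ennreal (Fbar m t)"
        using Fbar_mono[of t0 t m] t0 elim by (intro ennreal_leI) auto
      then show ?case using t0 elim by auto
    qed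
  qed
  moreover have "L \<le> ennreal (sm m)"
    unfolding L_def by (intro SUP_least ennreal_leI Fbar_le) auto
  ultimately show ?thesis by blast
qed

end

theorem mainTheorem7:
  fixes N :: nat and \<delta> lam :: real
    and a :: "nat \<Rightarrow> nat \<Rightarrow> real" and b :: "nat \<Rightarrow> nat \<Rightarrow> nat \<Rightarrow> real"
    and \<pi> :: "nat \<Rightarrow> real"
  assumes N: "N \<ge> 1" and delta: "\<delta> > 0"
    and a_nonneg: "\<And>i j. i \<in> {1..N} \<Longrightarrow> j \<in> {1..N} \<Longrightarrow> i \<noteq> j \<Longrightarrow> a i j \<ge> 0"
    and b_nonneg: "\<And>r i j. r \<ge> 1 \<Longrightarrow> i \<in> {1..N} \<Longrightarrow> j \<in> {1..N} \<Longrightarrow> b r i j \<ge> 0"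
    and irred: "irreducible_gen N (Dmat N a b)"
    and lam: "0 < lam" "lam < 1"
    and geom: "\<And>r i j. r \<ge> 1 \<Longrightarrow> i \<in> {1..N} \<Longrightarrow> j \<in> {1..N} \<Longrightarrow> b r i j = lam ^ (r - 1) * b 1 i j"
    and pi_nonneg: "\<And>i. i \<in> {1..N} \<Longrightarrow> \<pi> i \<ge> 0"
    and pi_sum: "(\<Sum>i\<in>{1..N}. \<pi> i) = 1"
    and pi_inv: "\<And>j. j \<in> {1..N} \<Longrightarrow> (\<Sum>i\<in>{1..N}. \<pi> i * Dmat N a b i j) = 0"
  shows "(\<forall>r\<ge>1. \<forall>i\<in>{1..N}. \<forall>j\<in>{1..N}.
            Cmat b r i j = lam ^ (r - 1) / (1 - lam) ^ (r + 1) * b 1 i j)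
       \<and> (\<forall>m::nat. \<exists>L. (piB \<pi> a b \<delta> N m \<longlongrightarrow> L) at_top \<and>
            L \<le> ennreal (1 / fact m * (lam / (1 - lam)) ^ m
                  * pochhammer (norm_inf N (b 1) / (\<delta> * lam * (1 - lam))) m))"
proof -
  interpret qm N \<delta> lam a b \<pi>
    by (rule qm.intro[OF N delta a_nonneg b_nonneg lam(1) lam(2) geom pi_nonneg pi_sum pi_inv])
  have A: "\<forall>r\<ge>1. \<forall>i\<in>{1..N}. \<forall>j\<in>{1..N}. Cmat b r i j = lam ^ (r - 1) / (1 - lam) ^ (r + 1) * b 1 i j"
    using Cmat_eq by blast
  have B: "\<exists>L. (piB \<pi> a b \<delta> N m \<longlongrightarrow> L) at_top \<and>
            L \<le> ennreal (1 / fact m * (lam / (1 - lam)) ^ m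
                  * pochhammer (norm_inf N (b 1) / (\<delta> * lam * (1 - lam))) m)" for m
    using limit_part[of m] unfolding sm_def nb_def .
  show ?thesis using A B by blast
qed


end
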